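(* Let $I$ be an ideal of $\mathbb{S}_n$ ($n\ge1$). The following are equivalent: (1) $\mathbb{S}_n/I$ is left Noetherian; (2) $\mathbb{S}_n/I$ is right Noetherian; (3) $\mathbb{S}_n/I$ is commutative; (4) $\mathfrak a_n\subseteq I$, i.e. $I$ contains all the height one primes $\mathfrak p_1,\dots,\mathfrak p_n$ of $\mathbb{S}_n$.
   Context: $K$ is a field. $\mathbb{S}_n$ is the $K$-algebra generated by $x_1,\dots,x_n,y_1,\dots,y_n$ subject to the defining relations $y_ix_i=1$ for all $i$, and $[x_i,y_j]=[x_i,x_j]=[y_i,y_j]=0$ for all $i\ne j$. For each $i$, $\mathbb{S}_1(i)$ is the subalgebra generated by $x_i,y_i$, and $\mathbb{S}_n=\mathbb{S}_1(1)\otimes\cdots\otimes\mathbb{S}_1(n)$. $F(i)=\bigoplus_{k,l\in\mathbb N}K(x_i^ky_i^l-x_i^{k+1}y_i^{l+1})$ is an ideal of $\mathbb{S}_1(i)$. Define $\mathfrak p_i=\mathbb{S}_1(1)\otimes\cdots\otimes F(i)\otimes\cdots\otimes\mathbb{S}_1(n)$ ($F(i)$ in the $i$-th factor); these are exactly the height one primes of $\mathbb{S}_n$. Set $\mathfrak a_n=\mathfrak p_1+\cdots+\mathfrak p_n$, so that $\mathbb{S}_n/\mathfrak a_n\cong K[x_1^{\pm1},\dots,x_n^{\pm1}]$. *)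

theory Defs
  imports "HOL-Algebra.QuotRing"
begin

text \<open>S_1 = K<x,y | yx = 1> has the K-basis of normal words x^k y^l (k,l in nat).
  A basis word x^k y^l is encoded as the pair (k,l). Multiplication of basis words:
  x^a y^b * x^c y^d = x^(a + c - min b c) y^(b + d - min b c) (this is the bicyclic monoid).\<close>

definition bmul :: "nat \<times> nat \<Rightarrow> nat \<times> nat \<Rightarrow> nat \<times> nat" where
  "bmul p q = (fst p + fst q - min (snd p) (fst q), snd p + snd q - min (snd p) (fst q))"

text \<open>S_n = S_1(1) (x) ... (x) S_1(n). Its basis words are tuples of S_1-words; the
  tensor factors are indexed by 0,...,n-1 (factor i here is the paper's factor i+1).\<close>

type_synonym word = "nat \<Rightarrow> nat \<times> nat"

definition words :: "nat \<Rightarrow> word set" where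
  "words n = {m. \<forall>i\<ge>n. m i = (0, 0)}"

definition wmul :: "word \<Rightarrow> word \<Rightarrow> word" where
  "wmul m m' = (\<lambda>i. bmul (m i) (m' i))"

definition supp :: "(word \<Rightarrow> 'a::zero) \<Rightarrow> word set" where
  "supp f = {m. f m \<noteq> 0}"

definition Jacobson_alg :: "nat \<Rightarrow> (word \<Rightarrow> 'a::field) ring" where
  "Jacobson_alg n =
    \<lparr> carrier = {f. finite (supp f) \<and> supp f \<subseteq> words n},
      monoid.mult = (\<lambda>f g m. \<Sum>p\<in>{p \<in> supp f \<times> supp g. wmul (fst p) (snd p) = m}.
                                  f (fst p) * g (snd p)),
      one = (\<lambda>m. if m = (\<lambda>_. (0, 0)) then 1 else 0),
      zero = (\<lambda>_. 0),
      add = (\<lambda>f g m. f m + g m) \<rparr>"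

definition basis_elt :: "word \<Rightarrow> (word \<Rightarrow> 'a::field)" where
  "basis_elt m = (\<lambda>m'. if m' = m then 1 else 0)"

text \<open>p_i = S_1 (x) ... (x) F(i) (x) ... (x) S_1 is the K-span of the elements
  (basis word with i-th entry x_i^k y_i^l) - (same word with i-th entry x_i^(k+1) y_i^(l+1)),
  since F(i) is spanned by the x_i^k y_i^l - x_i^(k+1) y_i^(l+1).\<close>

definition p_gen :: "nat \<Rightarrow> word \<Rightarrow> (word \<Rightarrow> 'a::field)" where
  "p_gen i m = (\<lambda>m'. basis_elt m m' - basis_elt (m(i := (fst (m i) + 1, snd (m i) + 1))) m')"

inductive_set K_span :: "(word \<Rightarrow> 'a::field) set \<Rightarrow> (word \<Rightarrow> 'a) set" for G where
  zero: "(\<lambda>_. 0) \<in> K_span G"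
| step: "g \<in> G \<Longrightarrow> s \<in> K_span G \<Longrightarrow> (\<lambda>m. c * g m + s m) \<in> K_span G"

definition height_one_prime :: "nat \<Rightarrow> nat \<Rightarrow> (word \<Rightarrow> 'a::field) set" where
  "height_one_prime n i = K_span {p_gen i m | m. m \<in> words n}"

text \<open>a_n = p_1 + ... + p_n (sum of subspaces = span of the union).\<close>

definition frak_a :: "nat \<Rightarrow> (word \<Rightarrow> 'a::field) set" where
  "frak_a n = K_span (\<Union>i<n. {p_gen i m | m. m \<in> words n})"

definition left_ideal :: "'b set \<Rightarrow> ('b, 'c) ring_scheme \<Rightarrow> bool" where
  "left_ideal J R \<longleftrightarrow> additive_subgroup J R \<and>
     (\<forall>r\<in>carrier R. \<forall>a\<in>J. r \<otimes>\<^bsub>R\<^esub> a \<in> J)"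

definition right_ideal :: "'b set \<Rightarrow> ('b, 'c) ring_scheme \<Rightarrow> bool" where
  "right_ideal J R \<longleftrightarrow> additive_subgroup J R \<and>
     (\<forall>r\<in>carrier R. \<forall>a\<in>J. a \<otimes>\<^bsub>R\<^esub> r \<in> J)"

definition left_noetherian :: "('b, 'c) ring_scheme \<Rightarrow> bool" where
  "left_noetherian R \<longleftrightarrow> (\<forall>C :: nat \<Rightarrow> 'b set.
     (\<forall>k. left_ideal (C k) R) \<and> (\<forall>k. C k \<subseteq> C (Suc k)) \<longrightarrow> (\<exists>N. \<forall>k\<ge>N. C k = C N))"

definition right_noetherian :: "('b, 'c) ring_scheme \<Rightarrow> bool" where
  "right_noetherian R \<longleftrightarrow> (\<forall>C :: nat \<Rightarrow> 'b set.
     (\<forall>k. right_ideal (C k) R) \<and> (\<forall>k. C k \<subseteq> C (Suc k)) \<longrightarrow> (\<exists>N. \<forall>k\<ge>N. C k = C N))"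

definition ring_commutative :: "('b, 'c) ring_scheme \<Rightarrow> bool" where
  "ring_commutative R \<longleftrightarrow> (\<forall>a\<in>carrier R. \<forall>b\<in>carrier R. a \<otimes>\<^bsub>R\<^esub> b = b \<otimes>\<^bsub>R\<^esub> a)"

end

theory Submission
  imports Defs "HOL-Library.List_Lenlexorder"
begin


definition w0 :: word where "w0 = (\<lambda>_. (0,0))"

lemma bmul_0_left[simp]: "bmul (0,0) q = q" by (simp add: bmul_def)
lemma bmul_0_right[simp]: "bmul q (0,0) = q" by (simp add: bmul_def)
lemma wmul_w0_left[simp]: "wmul w0 m = m" by (simp add: wmul_def w0_def)
lemma wmul_w0_right[simp]: "wmul m w0 = m" by (simp add: wmul_def w0_def)

lemma supp_basis[simp]: "supp (basis_elt m :: word \<Rightarrow> 'a::field) = {m}"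
  by (auto simp: supp_def basis_elt_def)

lemma J_carrier: "carrier (Jacobson_alg n :: (word \<Rightarrow> 'a::field) ring) = {f. finite (supp f) \<and> supp f \<subseteq> words n}"
  by (simp add: Jacobson_alg_def)
lemma J_zero: "\<zero>\<^bsub>(Jacobson_alg n :: (word \<Rightarrow> 'a::field) ring)\<^esub> = (\<lambda>_. 0)"
  by (simp add: Jacobson_alg_def)
lemma J_one: "\<one>\<^bsub>(Jacobson_alg n :: (word \<Rightarrow> 'a::field) ring)\<^esub> = basis_elt w0"
  by (simp add: Jacobson_alg_def basis_elt_def w0_def)
lemma J_add: "a \<oplus>\<^bsub>(Jacobson_alg n :: (word \<Rightarrow> 'a::field) ring)\<^esub> b = (\<lambda>m. a m + b m)"
  by (simp add: Jacobson_alg_def)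
lemma J_mult: "a \<otimes>\<^bsub>(Jacobson_alg n :: (word \<Rightarrow> 'a::field) ring)\<^esub> b =
   (\<lambda>m. \<Sum>p\<in>{p \<in> supp a \<times> supp b. wmul (fst p) (snd p) = m}. a (fst p) * b (snd p))"
  by (simp add: Jacobson_alg_def)

lemma basis_carrier: "m \<in> words n \<Longrightarrow> (basis_elt m :: word \<Rightarrow> 'a::field) \<in> carrier (Jacobson_alg n)"
  by (simp add: J_carrier)

lemma w0_words[simp]: "w0 \<in> words n" by (simp add: words_def w0_def)

lemma wmul_words: "a \<in> words n \<Longrightarrow> b \<in> words n \<Longrightarrow> wmul a b \<in> words n"
  by (simp add: words_def wmul_def bmul_def)

lemma basis_mult: "basis_elt a \<otimes>\<^bsub>(Jacobson_alg n :: (word \<Rightarrow> 'a::field) ring)\<^esub> basis_elt b = basis_elt (wmul a b)"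
proof -
  have *: "{p \<in> {a} \<times> {b}. wmul (fst p) (snd p) = m} = (if wmul a b = m then {(a,b)} else {})" for m
    by auto
  then show ?thesis
    unfolding J_mult supp_basis
  proof (intro ext)
    fix m
    show "(\<Sum>p\<in>{p \<in> {a} \<times> {b}. wmul (fst p) (snd p) = m}. (basis_elt a (fst p) :: 'a) * basis_elt b (snd p)) = basis_elt (wmul a b) m"
      by (simp only: *) (simp add: basis_elt_def)
  qed
qed

lemma mult_supp: "supp (a \<otimes>\<^bsub>(Jacobson_alg n :: (word \<Rightarrow> 'a::field) ring)\<^esub> b) \<subseteq> {wmul x y | x y. x \<in> supp a \<and> y \<in> supp b}"
proof
  fix m assume "m \<in> supp (a \<otimes>\<^bsub>(Jacobson_alg n :: (word \<Rightarrow> 'a::field) ring)\<^esub> b)"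
  note mm = this
  have "{p \<in> supp a \<times> supp b. wmul (fst p) (snd p) = m} \<noteq> {}"
  proof
    assume e: "{p \<in> supp a \<times> supp b. wmul (fst p) (snd p) = m} = {}"
    have "(a \<otimes>\<^bsub>(Jacobson_alg n :: (word \<Rightarrow> 'a::field) ring)\<^esub> b) m = 0"
      unfolding J_mult by (simp only: e sum.empty)
    with mm show False by (simp add: supp_def)
  qed
  then show "m \<in> {wmul x y | x y. x \<in> supp a \<and> y \<in> supp b}" by auto
qed

definition scal :: "'a::field \<Rightarrow> word \<Rightarrow> 'a" where
  "scal c = (\<lambda>m. if m = w0 then c else 0)"

lemma scal_carrier: "scal c \<in> carrier (Jacobson_alg n)"
proof -
  have "supp (scal c) \<subseteq> {w0}" by (auto simp: supp_def scal_def)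
  then show ?thesis by (auto simp: J_carrier intro: finite_subset)
qed

lemma scal_mult_left: "scal c \<otimes>\<^bsub>(Jacobson_alg n :: (word \<Rightarrow> 'a::field) ring)\<^esub> f = (\<lambda>m. c * f m)"
proof (cases "c = 0")
  case True
  then have "supp (scal c) = {}" by (auto simp: supp_def scal_def)
  then show ?thesis using True by (simp add: J_mult fun_eq_iff)
next
  case False
  then have s: "supp (scal c) = {w0}" by (auto simp: supp_def scal_def)
  have "{p \<in> {w0} \<times> supp f. wmul (fst p) (snd p) = m} = (if m \<in> supp f then {(w0,m)} else {})" for m
    by auto
  then show ?thesis using s by (auto simp: J_mult fun_eq_iff scal_def supp_def)
qed

lemma scal_mult_right: "f \<otimes>\<^bsub>(Jacobson_alg n :: (word \<Rightarrow> 'a::field) ring)\<^esub> scal c = (\<lambda>m. c * f m)"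
proof (cases "c = 0")
  case True
  then have "supp (scal c) = {}" by (auto simp: supp_def scal_def)
  then show ?thesis using True by (simp add: J_mult fun_eq_iff)
next
  case False
  then have s: "supp (scal c) = {w0}" by (auto simp: supp_def scal_def)
  have "{p \<in> supp f \<times> {w0}. wmul (fst p) (snd p) = m} = (if m \<in> supp f then {(m,w0)} else {})" for m
    by auto
  then show ?thesis using s by (auto simp: J_mult fun_eq_iff scal_def supp_def mult.commute)
qed


lemma K_span_add: "f \<in> K_span G \<Longrightarrow> g \<in> K_span G \<Longrightarrow> (\<lambda>m. f m + g m) \<in> K_span G"
proof (induction f rule: K_span.induct)
  case zero then show ?case by simp
next
  case (step h s c)
  then have "(\<lambda>m. c * h m + (s m + g m)) \<in> K_span G" by (intro K_span.step) auto
  then show ?case by (simp add: add.assoc)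
qed

lemma K_span_scal: "f \<in> K_span G \<Longrightarrow> (\<lambda>m. d * f m) \<in> K_span G"
proof (induction f rule: K_span.induct)
  case zero then show ?case using K_span.zero by simp
next
  case (step h s c)
  then have "(\<lambda>m. (d * c) * h m + d * s m) \<in> K_span G" by (intro K_span.step) auto
  then show ?case by (simp add: algebra_simps)
qed

lemma K_span_diff: "f \<in> K_span G \<Longrightarrow> g \<in> K_span G \<Longrightarrow> (\<lambda>m. f m - g m) \<in> K_span G"
  using K_span_add[of f G "\<lambda>m. (-1) * g m"] K_span_scal[of g G "-1"] by simp

lemma K_span_gen: "g \<in> G \<Longrightarrow> g \<in> K_span G"
proof -
  assume "g \<in> G"
  then have "(\<lambda>m. 1 * g m + 0) \<in> K_span G" by (rule K_span.step[OF _ K_span.zero])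
  then show ?thesis by simp
qed

lemma K_span_mono: "f \<in> K_span G \<Longrightarrow> G \<subseteq> H \<Longrightarrow> f \<in> K_span H"
  by (induction f rule: K_span.induct) (auto intro: K_span.intros)

lemma K_span_subset:
  assumes "(\<lambda>_. 0) \<in> S" "\<And>g s c. g \<in> G \<Longrightarrow> s \<in> S \<Longrightarrow> (\<lambda>m. c * g m + s m) \<in> S"
  shows "K_span G \<subseteq> S"
proof
  fix f assume "f \<in> K_span G" then show "f \<in> S" by (induction f rule: K_span.induct) (auto intro: assms)
qed

lemma carrier_in_span:
  assumes "f \<in> carrier (Jacobson_alg n :: (word \<Rightarrow> 'a::field) ring)"
  shows "f \<in> K_span {basis_elt m | m. m \<in> words n}"
proof -
  have fin: "finite (supp f)" and sub: "supp f \<subseteq> words n" using assms by (auto simp: J_carrier)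
  have "\<And>f::word \<Rightarrow> 'a. supp f = S \<Longrightarrow> S \<subseteq> words n \<Longrightarrow> f \<in> K_span {basis_elt m | m. m \<in> words n}" if "finite S" for S
    using that
  proof (induction S rule: finite_induct)
    case empty
    then have "f = (\<lambda>_. 0)" by (auto simp: supp_def fun_eq_iff)
    then show ?case using K_span.zero by simp
  next
    case (insert x F f)
    define f' where "f' = f(x := 0)"
    have "supp f' = F" using insert by (auto simp: supp_def f'_def)
    then have s: "f' \<in> K_span {basis_elt m | m. m \<in> words n}" using insert by auto
    have g: "basis_elt x \<in> {basis_elt m | m. m \<in> words n}" using insert by auto
    from g s have "(\<lambda>m. f x * basis_elt x m + f' m) \<in> K_span {basis_elt m | m. m \<in> words n}"
      by (rule K_span.step)
    moreover have "(\<lambda>m. f x * basis_elt x m + f' m) = f"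
    proof (rule ext)
      fix m show "f x * basis_elt x m + f' m = f m"
        by (cases "m = x") (simp_all add: f'_def basis_elt_def)
    qed
    ultimately show ?case by simp
  qed
  then show ?thesis using fin sub by blast
qed

lemma carrier_pointwise:
  "finite (supp f) \<Longrightarrow> supp f \<subseteq> words n \<Longrightarrow> f \<in> carrier (Jacobson_alg n :: (word \<Rightarrow> 'a::field) ring)"
  by (simp add: J_carrier)

lemma scal_fun_carrier: "f \<in> carrier (Jacobson_alg n :: (word \<Rightarrow> 'a::field) ring) \<Longrightarrow> (\<lambda>m. c * f m) \<in> carrier (Jacobson_alg n)"
proof -
  assume "f \<in> carrier (Jacobson_alg n :: (word \<Rightarrow> 'a::field) ring)"
  moreover have "supp (\<lambda>m. c * f m) \<subseteq> supp f" by (auto simp: supp_def)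
  ultimately show ?thesis by (auto simp: J_carrier intro: finite_subset)
qed

lemma words_fun_upd: "m \<in> words n \<Longrightarrow> i < n \<Longrightarrow> m(i := q) \<in> words n"
  by (auto simp: words_def)

locale jac =
  fixes n :: nat and I :: "(word \<Rightarrow> 'a::field) set"
  assumes I_ideal: "ideal I (Jacobson_alg n :: (word \<Rightarrow> 'a) ring)"
begin

abbreviation J where "J \<equiv> (Jacobson_alg n :: (word \<Rightarrow> 'a) ring)"

lemma Jring: "ring J" using I_ideal by (simp add: ideal_def)

lemma a_inv_J: "f \<in> carrier J \<Longrightarrow> \<ominus>\<^bsub>J\<^esub> f = (\<lambda>m. - f m)"
proof -
  assume f: "f \<in> carrier J"
  have c: "(\<lambda>m. - f m) \<in> carrier J" using scal_fun_carrier[OF f, of "-1"] by simp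
  have "(\<lambda>m. - f m) \<oplus>\<^bsub>J\<^esub> f = \<zero>\<^bsub>J\<^esub>" by (simp add: J_add J_zero)
  then show ?thesis using c f
    by (intro abelian_group.minus_equality[OF ring.is_abelian_group[OF Jring]])
qed

lemma minus_J: "f \<in> carrier J \<Longrightarrow> g \<in> carrier J \<Longrightarrow> f \<ominus>\<^bsub>J\<^esub> g = (\<lambda>m. f m - g m)"
  by (simp add: a_minus_def a_inv_J J_add)

lemma scal_fun_eq: "(\<lambda>m. c * f m) = scal c \<otimes>\<^bsub>J\<^esub> f"
  by (simp add: scal_mult_left)

lemma I_sub: "I \<subseteq> carrier J" using ideal.Icarr[OF I_ideal] by blast

lemma I_scal: "f \<in> I \<Longrightarrow> (\<lambda>m. c * f m) \<in> I"
  unfolding scal_fun_eq by (rule ideal.I_l_closed[OF I_ideal _ scal_carrier])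

lemma I_add: "f \<in> I \<Longrightarrow> g \<in> I \<Longrightarrow> (\<lambda>m. f m + g m) \<in> I"
  using additive_subgroup.a_closed[OF ideal.axioms(1)[OF I_ideal]] by (simp add: J_add)

lemma I_zero: "(\<lambda>_. 0) \<in> I"
  using additive_subgroup.zero_closed[OF ideal.axioms(1)[OF I_ideal]] by (simp add: J_zero)

lemma K_span_in_I: "G \<subseteq> I \<Longrightarrow> K_span G \<subseteq> I"
  by (rule K_span_subset) (auto intro!: I_zero I_add I_scal)

end


context jac begin

abbreviation Q where "Q \<equiv> J Quot I"

lemma Q_carrier: "carrier Q = {I +>\<^bsub>J\<^esub> a | a. a \<in> carrier J}"
  by (auto simp: FactRing_def A_RCOSETS_def')

lemma Q_mult: "a \<in> carrier J \<Longrightarrow> b \<in> carrier J \<Longrightarrow>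
   (I +>\<^bsub>J\<^esub> a) \<otimes>\<^bsub>Q\<^esub> (I +>\<^bsub>J\<^esub> b) = I +>\<^bsub>J\<^esub> (a \<otimes>\<^bsub>J\<^esub> b)"
  by (simp add: FactRing_def ideal.rcoset_mult_add[OF I_ideal])

lemma Q_add: "a \<in> carrier J \<Longrightarrow> b \<in> carrier J \<Longrightarrow>
   (I +>\<^bsub>J\<^esub> a) \<oplus>\<^bsub>Q\<^esub> (I +>\<^bsub>J\<^esub> b) = I +>\<^bsub>J\<^esub> (a \<oplus>\<^bsub>J\<^esub> b)"
proof -
  interpret ideal I J by (rule I_ideal)
  assume "a \<in> carrier J" "b \<in> carrier J"
  then show ?thesis by (simp add: FactRing_def a_rcos_sum)
qed

lemma Q_zero: "\<zero>\<^bsub>Q\<^esub> = I" by (simp add: FactRing_def)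

lemma Q_eq: "a \<in> carrier J \<Longrightarrow> b \<in> carrier J \<Longrightarrow>
   (I +>\<^bsub>J\<^esub> a = I +>\<^bsub>J\<^esub> b) \<longleftrightarrow> a \<ominus>\<^bsub>J\<^esub> b \<in> I"
proof -
  interpret ideal I J by (rule I_ideal)
  assume a: "a \<in> carrier J" and b: "b \<in> carrier J"
  show ?thesis
  proof
    assume "I +>\<^bsub>J\<^esub> a = I +>\<^bsub>J\<^esub> b"
    then have "a \<in> I +>\<^bsub>J\<^esub> b" using a_repr_independenceD[OF a, of b] by simp
    then show "a \<ominus>\<^bsub>J\<^esub> b \<in> I" using a_rcos_module_minus[OF Jring b a] by simp
  next
    assume "a \<ominus>\<^bsub>J\<^esub> b \<in> I"
    then have "a \<in> I +>\<^bsub>J\<^esub> b" using a_rcos_module_minus[OF Jring b a] by simp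
    then show "I +>\<^bsub>J\<^esub> a = I +>\<^bsub>J\<^esub> b" using a_repr_independence'[OF _ b] by simp
  qed
qed

lemma Q_comm_iff: "ring_commutative Q \<longleftrightarrow>
   (\<forall>a\<in>carrier J. \<forall>b\<in>carrier J. (a \<otimes>\<^bsub>J\<^esub> b) \<ominus>\<^bsub>J\<^esub> (b \<otimes>\<^bsub>J\<^esub> a) \<in> I)"
proof -
  interpret ring J by (rule Jring)
  have "(I +>\<^bsub>J\<^esub> a) \<otimes>\<^bsub>Q\<^esub> (I +>\<^bsub>J\<^esub> b) = (I +>\<^bsub>J\<^esub> b) \<otimes>\<^bsub>Q\<^esub> (I +>\<^bsub>J\<^esub> a)
     \<longleftrightarrow> (a \<otimes>\<^bsub>J\<^esub> b) \<ominus>\<^bsub>J\<^esub> (b \<otimes>\<^bsub>J\<^esub> a) \<in> I" if "a \<in> carrier J" "b \<in> carrier J" for a b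
    using that by (simp add: Q_mult Q_eq)
  then show ?thesis
    unfolding ring_commutative_def Q_carrier by blast
qed

end


definition nfp :: "nat \<times> nat \<Rightarrow> nat \<times> nat" where
  "nfp q = (fst q - min (fst q) (snd q), snd q - min (fst q) (snd q))"

definition nf :: "word \<Rightarrow> word" where "nf u = (\<lambda>i. nfp (u i))"

lemma nfp_eq: "fst x + snd y = fst y + snd x \<Longrightarrow> nfp x = nfp y"
  by (cases x, cases y) (auto simp: nfp_def min_def)

lemma bmul_comm_diff: "fst (bmul p q) + snd (bmul q p) = fst (bmul q p) + snd (bmul p q)"
  by (cases p, cases q) (auto simp: bmul_def min_def)

lemma nf_wmul_comm: "nf (wmul a b) = nf (wmul b a)"
  unfolding nf_def wmul_def by (rule ext) (rule nfp_eq[OF bmul_comm_diff])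

lemma frak_a_gen: "i < n \<Longrightarrow> m \<in> words n \<Longrightarrow> p_gen i m \<in> frak_a n"
  unfolding frak_a_def by (rule K_span_gen) blast

lemma diff_nf:
  assumes "u \<in> words n"
  shows "(\<lambda>w. basis_elt u w - basis_elt (nf u) w) \<in> (frak_a n :: (word \<Rightarrow> 'a::field) set)"
proof -
  define t where "t = (\<Sum>i<n. min (fst (u i)) (snd (u i)))"
  have "\<And>u. u \<in> words n \<Longrightarrow> t = (\<Sum>i<n. min (fst (u i)) (snd (u i))) \<Longrightarrow>
      (\<lambda>w. basis_elt u w - basis_elt (nf u) w) \<in> (frak_a n :: (word \<Rightarrow> 'a::field) set)"
  proof (induction t rule: less_induct)
    case (less t u)
    show ?case
    proof (cases "\<exists>i<n. min (fst (u i)) (snd (u i)) > 0")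
      case False
      have "nf u = u"
      proof (rule ext)
        fix i show "nf u i = u i"
        proof (cases "i < n")
          case True then have "fst (u i) = 0 \<or> snd (u i) = 0" using False by auto
          then show ?thesis by (cases "u i") (auto simp: nf_def nfp_def)
        next
          case False then show ?thesis using less.prems by (auto simp: nf_def nfp_def words_def)
        qed
      qed
      then show ?thesis using K_span.zero by (simp add: frak_a_def)
    next
      case True
      then obtain i where i: "i < n" "min (fst (u i)) (snd (u i)) > 0" by auto
      obtain k l where kl: "u i = (Suc k, Suc l)"
        using i(2) by (cases "u i") (auto simp: gr0_conv_Suc)
      define u' where "u' = u(i := (k, l))"
      have u'w: "u' \<in> words n" using less.prems i by (auto simp: u'_def words_def)
      have uu: "u'(i := (fst (u' i) + 1, snd (u' i) + 1)) = u"
        using kl by (auto simp: u'_def)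
      have pg: "(p_gen i u' :: word \<Rightarrow> 'a) = (\<lambda>w. basis_elt u' w - basis_elt u w)"
        unfolding p_gen_def uu ..
      have nfu: "nf u' = nf u"
        unfolding nf_def u'_def using kl by (auto simp: nfp_def)
      have lt: "(\<Sum>i<n. min (fst (u' i)) (snd (u' i))) < t"
        unfolding less.prems(2)
        by (rule sum_strict_mono_ex1) (use i kl in \<open>auto simp: u'_def\<close>)
      have IH: "(\<lambda>w. basis_elt u' w - basis_elt (nf u') w) \<in> (frak_a n :: (word \<Rightarrow> 'a::field) set)"
        by (rule less.IH[OF lt u'w refl])
      have "p_gen i u' \<in> (frak_a n :: (word \<Rightarrow> 'a::field) set)" by (rule frak_a_gen[OF i(1) u'w])
      then have "(\<lambda>w. basis_elt u' w - basis_elt u w) \<in> (frak_a n :: (word \<Rightarrow> 'a::field) set)"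
        using pg by simp
      from K_span_diff[OF IH[unfolded frak_a_def] this[unfolded frak_a_def]]
      show ?thesis unfolding frak_a_def nfu by simp
    qed
  qed
  then show ?thesis using assms t_def by blast
qed

lemma same_nf:
  assumes "u \<in> words n" "w \<in> words n" "nf u = nf w"
  shows "(\<lambda>x. basis_elt u x - basis_elt w x) \<in> (frak_a n :: (word \<Rightarrow> 'a::field) set)"
  using K_span_diff[OF diff_nf[OF assms(1), unfolded frak_a_def] diff_nf[OF assms(2), unfolded frak_a_def]]
  unfolding frak_a_def assms(3) by simp


definition dl :: "nat \<Rightarrow> nat \<times> nat \<Rightarrow> word" where "dl i q = w0(i := q)"

lemma dl_words: "i < n \<Longrightarrow> dl i q \<in> words n" by (auto simp: dl_def words_def w0_def)

context jac begin

lemma e_carr: "m \<in> words n \<Longrightarrow> (basis_elt m :: word \<Rightarrow> 'a) \<in> carrier J"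
  by (rule basis_carrier)

lemma ring_id1: "x \<in> carrier J \<Longrightarrow> a \<in> carrier J \<Longrightarrow> b \<in> carrier J \<Longrightarrow> y \<in> carrier J \<Longrightarrow>
   x \<otimes>\<^bsub>J\<^esub> (a \<ominus>\<^bsub>J\<^esub> b) \<otimes>\<^bsub>J\<^esub> y = x \<otimes>\<^bsub>J\<^esub> a \<otimes>\<^bsub>J\<^esub> y \<ominus>\<^bsub>J\<^esub> x \<otimes>\<^bsub>J\<^esub> b \<otimes>\<^bsub>J\<^esub> y"
proof -
  interpret ring J by (rule Jring)
  show "x \<in> carrier J \<Longrightarrow> a \<in> carrier J \<Longrightarrow> b \<in> carrier J \<Longrightarrow> y \<in> carrier J \<Longrightarrow> ?thesis"
    by algebra
qed

lemma comm_imp_frak: assumes "ring_commutative Q" shows "frak_a n \<subseteq> I"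
proof -
  have C: "\<And>a b. a \<in> carrier J \<Longrightarrow> b \<in> carrier J \<Longrightarrow> (a \<otimes>\<^bsub>J\<^esub> b) \<ominus>\<^bsub>J\<^esub> (b \<otimes>\<^bsub>J\<^esub> a) \<in> I"
    using assms Q_comm_iff by blast
  have "p_gen i m \<in> I" if i: "i < n" and m: "m \<in> words n" for i m
  proof -
    obtain k l where kl: "m i = (k, l)" by force
    define u where "u = m(i := (k, 0))"
    define v where "v = dl i (0, l)"
    have uw: "u \<in> words n" using m i by (auto simp: u_def words_def)
    have vw: "v \<in> words n" using i by (simp add: v_def dl_words)
    have XY: "wmul (dl i (1,0)) (dl i (0,1)) = dl i (1,1)"
      by (rule ext) (simp add: wmul_def dl_def w0_def bmul_def)
    have YX: "wmul (dl i (0,1)) (dl i (1,0)) = w0"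
      by (rule ext) (simp add: wmul_def dl_def w0_def bmul_def)
    have uv: "wmul u v = m"
      by (rule ext) (simp add: wmul_def dl_def w0_def bmul_def u_def v_def kl)
    have uEv: "wmul (wmul u (dl i (1,1))) v = m(i := (fst (m i) + 1, snd (m i) + 1))"
      by (rule ext) (simp add: wmul_def dl_def w0_def bmul_def u_def v_def kl)
    have "basis_elt (dl i (1,1)) \<ominus>\<^bsub>J\<^esub> basis_elt w0 \<in> I"
      using C[OF e_carr[OF dl_words[OF i]] e_carr[OF dl_words[OF i]], of "(1,0)" "(0,1)"]
      by (simp only: basis_mult XY YX)
    then have "basis_elt u \<otimes>\<^bsub>J\<^esub> (basis_elt (dl i (1,1)) \<ominus>\<^bsub>J\<^esub> basis_elt w0) \<otimes>\<^bsub>J\<^esub> basis_elt v \<in> I"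
      using ideal.I_l_closed[OF I_ideal _ e_carr[OF uw]] ideal.I_r_closed[OF I_ideal _ e_carr[OF vw]]
      by blast
    also have "basis_elt u \<otimes>\<^bsub>J\<^esub> (basis_elt (dl i (1,1)) \<ominus>\<^bsub>J\<^esub> basis_elt w0) \<otimes>\<^bsub>J\<^esub> basis_elt v
       = basis_elt (m(i := (fst (m i) + 1, snd (m i) + 1))) \<ominus>\<^bsub>J\<^esub> basis_elt m"
      by (simp add: ring_id1 e_carr uw vw dl_words i basis_mult uv uEv[simplified])
    also have "\<dots> = (\<lambda>w. - p_gen i m w)"
      by (simp add: minus_J e_carr m words_fun_upd i p_gen_def)
    finally have "(\<lambda>w. (-1) * (- p_gen i m w)) \<in> I" by (rule I_scal)
    then show ?thesis by simp
  qed
  then show ?thesis unfolding frak_a_def by (intro K_span_in_I) blast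
qed


lemma scal_central: "a \<in> carrier J \<Longrightarrow> a \<otimes>\<^bsub>J\<^esub> scal c = scal c \<otimes>\<^bsub>J\<^esub> a"
  by (simp add: scal_mult_left scal_mult_right)

lemma ring_id2: "a \<in> carrier J \<Longrightarrow> x \<in> carrier J \<Longrightarrow> s \<in> carrier J \<Longrightarrow>
   a \<otimes>\<^bsub>J\<^esub> (x \<oplus>\<^bsub>J\<^esub> s) \<ominus>\<^bsub>J\<^esub> (x \<oplus>\<^bsub>J\<^esub> s) \<otimes>\<^bsub>J\<^esub> a =
   (a \<otimes>\<^bsub>J\<^esub> x \<ominus>\<^bsub>J\<^esub> x \<otimes>\<^bsub>J\<^esub> a) \<oplus>\<^bsub>J\<^esub> (a \<otimes>\<^bsub>J\<^esub> s \<ominus>\<^bsub>J\<^esub> s \<otimes>\<^bsub>J\<^esub> a)"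
proof -
  interpret ring J by (rule Jring)
  show "a \<in> carrier J \<Longrightarrow> x \<in> carrier J \<Longrightarrow> s \<in> carrier J \<Longrightarrow> ?thesis"
    by algebra
qed

lemma ring_id3: "a \<in> carrier J \<Longrightarrow> c \<in> carrier J \<Longrightarrow> g \<in> carrier J \<Longrightarrow> a \<otimes>\<^bsub>J\<^esub> c = c \<otimes>\<^bsub>J\<^esub> a \<Longrightarrow>
   a \<otimes>\<^bsub>J\<^esub> (c \<otimes>\<^bsub>J\<^esub> g) \<ominus>\<^bsub>J\<^esub> (c \<otimes>\<^bsub>J\<^esub> g) \<otimes>\<^bsub>J\<^esub> a =
   c \<otimes>\<^bsub>J\<^esub> (a \<otimes>\<^bsub>J\<^esub> g \<ominus>\<^bsub>J\<^esub> g \<otimes>\<^bsub>J\<^esub> a)"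
proof -
  interpret ring J by (rule Jring)
  assume *: "a \<in> carrier J" "c \<in> carrier J" "g \<in> carrier J" "a \<otimes>\<^bsub>J\<^esub> c = c \<otimes>\<^bsub>J\<^esub> a"
  then have "a \<otimes>\<^bsub>J\<^esub> (c \<otimes>\<^bsub>J\<^esub> g) = c \<otimes>\<^bsub>J\<^esub> (a \<otimes>\<^bsub>J\<^esub> g)"
    by (metis m_assoc)
  with * show ?thesis using m_closed by (simp add: m_assoc, algebra)
qed

lemma I_plus: "x \<in> I \<Longrightarrow> y \<in> I \<Longrightarrow> x \<oplus>\<^bsub>J\<^esub> y \<in> I"
  using additive_subgroup.a_closed[OF ideal.axioms(1)[OF I_ideal]] by blast

lemma I_lmul: "x \<in> I \<Longrightarrow> r \<in> carrier J \<Longrightarrow> r \<otimes>\<^bsub>J\<^esub> x \<in> I"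
  using ideal.I_l_closed[OF I_ideal] by blast

lemma I_rmul: "x \<in> I \<Longrightarrow> r \<in> carrier J \<Longrightarrow> x \<otimes>\<^bsub>J\<^esub> r \<in> I"
  using ideal.I_r_closed[OF I_ideal] by blast

lemma comm_span:
  assumes a: "a \<in> carrier J"
    and G: "\<And>g. g \<in> G \<Longrightarrow> g \<in> carrier J \<and> (a \<otimes>\<^bsub>J\<^esub> g) \<ominus>\<^bsub>J\<^esub> (g \<otimes>\<^bsub>J\<^esub> a) \<in> I"
    and b: "b \<in> K_span G"
  shows "b \<in> carrier J \<and> (a \<otimes>\<^bsub>J\<^esub> b) \<ominus>\<^bsub>J\<^esub> (b \<otimes>\<^bsub>J\<^esub> a) \<in> I"
  using b
proof (induction b rule: K_span.induct)
  case zero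
  interpret ring J by (rule Jring)
  have "(a \<otimes>\<^bsub>J\<^esub> \<zero>\<^bsub>J\<^esub>) \<ominus>\<^bsub>J\<^esub> (\<zero>\<^bsub>J\<^esub> \<otimes>\<^bsub>J\<^esub> a) = \<zero>\<^bsub>J\<^esub>"
    using a by algebra
  then show ?case using I_zero zero_closed unfolding J_zero by simp
next
  case (step g s c)
  interpret ring J by (rule Jring)
  have g: "g \<in> carrier J" and gI: "(a \<otimes>\<^bsub>J\<^esub> g) \<ominus>\<^bsub>J\<^esub> (g \<otimes>\<^bsub>J\<^esub> a) \<in> I" using G step by auto
  have s: "s \<in> carrier J" and sI: "(a \<otimes>\<^bsub>J\<^esub> s) \<ominus>\<^bsub>J\<^esub> (s \<otimes>\<^bsub>J\<^esub> a) \<in> I" using step by auto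
  have eq: "(\<lambda>m. c * g m + s m) = (scal c \<otimes>\<^bsub>J\<^esub> g) \<oplus>\<^bsub>J\<^esub> s"
    by (simp add: J_add scal_mult_left)
  have sc: "scal c \<in> carrier J" by (rule scal_carrier)
  have "(a \<otimes>\<^bsub>J\<^esub> (scal c \<otimes>\<^bsub>J\<^esub> g)) \<ominus>\<^bsub>J\<^esub> ((scal c \<otimes>\<^bsub>J\<^esub> g) \<otimes>\<^bsub>J\<^esub> a) \<in> I"
    using ring_id3[OF a sc g scal_central[OF a]] I_lmul[OF gI sc] by simp
  then have "(a \<otimes>\<^bsub>J\<^esub> ((scal c \<otimes>\<^bsub>J\<^esub> g) \<oplus>\<^bsub>J\<^esub> s)) \<ominus>\<^bsub>J\<^esub> (((scal c \<otimes>\<^bsub>J\<^esub> g) \<oplus>\<^bsub>J\<^esub> s) \<otimes>\<^bsub>J\<^esub> a) \<in> I"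
    using ring_id2[OF a m_closed[OF sc g] s] I_plus sI by simp
  then show ?case unfolding eq using sc g s by simp
qed

lemma comm_sym: "a \<in> carrier J \<Longrightarrow> b \<in> carrier J \<Longrightarrow> (a \<otimes>\<^bsub>J\<^esub> b) \<ominus>\<^bsub>J\<^esub> (b \<otimes>\<^bsub>J\<^esub> a) \<in> I
   \<Longrightarrow> (b \<otimes>\<^bsub>J\<^esub> a) \<ominus>\<^bsub>J\<^esub> (a \<otimes>\<^bsub>J\<^esub> b) \<in> I"
proof -
  interpret ring J by (rule Jring)
  assume a: "a \<in> carrier J" and b: "b \<in> carrier J" and h: "(a \<otimes>\<^bsub>J\<^esub> b) \<ominus>\<^bsub>J\<^esub> (b \<otimes>\<^bsub>J\<^esub> a) \<in> I"
  have "(b \<otimes>\<^bsub>J\<^esub> a) \<ominus>\<^bsub>J\<^esub> (a \<otimes>\<^bsub>J\<^esub> b) = scal (-1) \<otimes>\<^bsub>J\<^esub> ((a \<otimes>\<^bsub>J\<^esub> b) \<ominus>\<^bsub>J\<^esub> (b \<otimes>\<^bsub>J\<^esub> a))"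
    using a b by (simp add: scal_mult_left minus_J)
  then show ?thesis using I_lmul[OF h scal_carrier] by simp
qed

lemma frak_imp_comm: assumes "frak_a n \<subseteq> I" shows "ring_commutative Q"
proof -
  let ?B = "{basis_elt m | m. m \<in> words n} :: (word \<Rightarrow> 'a) set"
  have bb: "(a \<otimes>\<^bsub>J\<^esub> b) \<ominus>\<^bsub>J\<^esub> (b \<otimes>\<^bsub>J\<^esub> a) \<in> I" if ab: "a \<in> ?B" "b \<in> ?B" for a b
  proof -
    from ab(1) obtain m where m: "m \<in> words n" "a = basis_elt m" by auto
    from ab(2) obtain m' where m': "m' \<in> words n" "b = basis_elt m'" by auto
    have "(\<lambda>x. basis_elt (wmul m m') x - basis_elt (wmul m' m) x) \<in> (frak_a n :: (word \<Rightarrow> 'a) set)"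
      by (rule same_nf[OF wmul_words[OF m(1) m'(1)] wmul_words[OF m'(1) m(1)] nf_wmul_comm])
    then show ?thesis using assms m m'
      by (auto simp: basis_mult minus_J e_carr wmul_words)
  qed
  have b1: "(a \<otimes>\<^bsub>J\<^esub> b) \<ominus>\<^bsub>J\<^esub> (b \<otimes>\<^bsub>J\<^esub> a) \<in> I" if "a \<in> ?B" "b \<in> carrier J" for a b
    using comm_span[of a ?B b] that bb carrier_in_span[of b n] e_carr by blast
  have "(a \<otimes>\<^bsub>J\<^esub> b) \<ominus>\<^bsub>J\<^esub> (b \<otimes>\<^bsub>J\<^esub> a) \<in> I" if "a \<in> carrier J" "b \<in> carrier J" for a b
  proof -
    have "\<And>g. g \<in> ?B \<Longrightarrow> g \<in> carrier J \<and> (b \<otimes>\<^bsub>J\<^esub> g) \<ominus>\<^bsub>J\<^esub> (g \<otimes>\<^bsub>J\<^esub> b) \<in> I"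
      using b1 comm_sym that e_carr by blast
    then have "(b \<otimes>\<^bsub>J\<^esub> a) \<ominus>\<^bsub>J\<^esub> (a \<otimes>\<^bsub>J\<^esub> b) \<in> I"
      using comm_span[of b ?B a] that carrier_in_span[of a n] by blast
    then show ?thesis using comm_sym that by blast
  qed
  then show ?thesis using Q_comm_iff by blast
qed

end


context jac begin

lemma Qring: "ring Q" by (rule ideal.quotient_is_ring[OF I_ideal])

lemma I_rcos_zero: "I +>\<^bsub>J\<^esub> \<zero>\<^bsub>J\<^esub> = I"
proof -
  interpret ideal I J by (rule I_ideal)
  show ?thesis by (rule a_rcos_const) simp
qed

lemma Q_a_inv: "a \<in> carrier J \<Longrightarrow> \<ominus>\<^bsub>Q\<^esub> (I +>\<^bsub>J\<^esub> a) = I +>\<^bsub>J\<^esub> (\<ominus>\<^bsub>J\<^esub> a)"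
proof -
  interpret ring J by (rule Jring)
  interpret Q: ring Q by (rule Qring)
  assume a: "a \<in> carrier J"
  have c1: "I +>\<^bsub>J\<^esub> a \<in> carrier Q" using a Q_carrier by blast
  have c2: "I +>\<^bsub>J\<^esub> (\<ominus>\<^bsub>J\<^esub> a) \<in> carrier Q" using a Q_carrier by blast
  have "(I +>\<^bsub>J\<^esub> (\<ominus>\<^bsub>J\<^esub> a)) \<oplus>\<^bsub>Q\<^esub> (I +>\<^bsub>J\<^esub> a) = \<zero>\<^bsub>Q\<^esub>"
    using a by (simp add: Q_add Q_zero I_rcos_zero l_neg)
  then show ?thesis using Q.minus_equality c1 c2 by blast
qed

lemma Q_addsub:
  assumes L: "L \<subseteq> carrier J" "\<zero>\<^bsub>J\<^esub> \<in> L" "\<And>a b. a \<in> L \<Longrightarrow> b \<in> L \<Longrightarrow> a \<oplus>\<^bsub>J\<^esub> b \<in> L"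
    "\<And>a. a \<in> L \<Longrightarrow> \<ominus>\<^bsub>J\<^esub> a \<in> L"
  shows "additive_subgroup ((\<lambda>a. I +>\<^bsub>J\<^esub> a) ` L) Q"
proof (intro additive_subgroup.intro subgroup.intro)
  show "(\<lambda>a. I +>\<^bsub>J\<^esub> a) ` L \<subseteq> carrier (add_monoid Q)" using L(1) Q_carrier by auto
  show "x \<otimes>\<^bsub>add_monoid Q\<^esub> y \<in> (\<lambda>a. I +>\<^bsub>J\<^esub> a) ` L"
    if xy: "x \<in> (\<lambda>a. I +>\<^bsub>J\<^esub> a) ` L" "y \<in> (\<lambda>a. I +>\<^bsub>J\<^esub> a) ` L" for x y
  proof -
    obtain a b where ab: "a \<in> L" "b \<in> L" "x = I +>\<^bsub>J\<^esub> a" "y = I +>\<^bsub>J\<^esub> b" using xy by blast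
    have "x \<otimes>\<^bsub>add_monoid Q\<^esub> y = I +>\<^bsub>J\<^esub> (a \<oplus>\<^bsub>J\<^esub> b)"
      using ab L(1) Q_add by auto
    then show ?thesis using L(3) ab by blast
  qed
  show "\<one>\<^bsub>add_monoid Q\<^esub> \<in> (\<lambda>a. I +>\<^bsub>J\<^esub> a) ` L"
    using L(2) I_rcos_zero by (force simp: Q_zero)
  show "inv\<^bsub>add_monoid Q\<^esub> x \<in> (\<lambda>a. I +>\<^bsub>J\<^esub> a) ` L" if xx: "x \<in> (\<lambda>a. I +>\<^bsub>J\<^esub> a) ` L" for x
  proof -
    obtain a where a: "a \<in> L" "x = I +>\<^bsub>J\<^esub> a" using xx by blast
    have "inv\<^bsub>add_monoid Q\<^esub> x = I +>\<^bsub>J\<^esub> (\<ominus>\<^bsub>J\<^esub> a)"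
      using a L(1) Q_a_inv[of a] unfolding a_inv_def by auto
    then show ?thesis using L(4) a by blast
  qed
qed

lemma Q_left_ideal:
  assumes L: "L \<subseteq> carrier J" "\<zero>\<^bsub>J\<^esub> \<in> L" "\<And>a b. a \<in> L \<Longrightarrow> b \<in> L \<Longrightarrow> a \<oplus>\<^bsub>J\<^esub> b \<in> L"
    "\<And>a. a \<in> L \<Longrightarrow> \<ominus>\<^bsub>J\<^esub> a \<in> L" "\<And>r a. r \<in> carrier J \<Longrightarrow> a \<in> L \<Longrightarrow> r \<otimes>\<^bsub>J\<^esub> a \<in> L"
  shows "left_ideal ((\<lambda>a. I +>\<^bsub>J\<^esub> a) ` L) Q"
  unfolding left_ideal_def
proof (intro conjI Q_addsub[OF L(1-4)] ballI)
  fix r x assume r: "r \<in> carrier Q" and x: "x \<in> (\<lambda>a. I +>\<^bsub>J\<^esub> a) ` L"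
  obtain r' where r': "r' \<in> carrier J" "r = I +>\<^bsub>J\<^esub> r'" using r Q_carrier by blast
  obtain a where a: "a \<in> L" "x = I +>\<^bsub>J\<^esub> a" using x by blast
  have "r \<otimes>\<^bsub>Q\<^esub> x = I +>\<^bsub>J\<^esub> (r' \<otimes>\<^bsub>J\<^esub> a)" using r' a L(1) Q_mult by blast
  then show "r \<otimes>\<^bsub>Q\<^esub> x \<in> (\<lambda>a. I +>\<^bsub>J\<^esub> a) ` L" using L(5) r' a by blast
qed (auto intro: L)

lemma Q_right_ideal:
  assumes L: "L \<subseteq> carrier J" "\<zero>\<^bsub>J\<^esub> \<in> L" "\<And>a b. a \<in> L \<Longrightarrow> b \<in> L \<Longrightarrow> a \<oplus>\<^bsub>J\<^esub> b \<in> L"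
    "\<And>a. a \<in> L \<Longrightarrow> \<ominus>\<^bsub>J\<^esub> a \<in> L" "\<And>r a. r \<in> carrier J \<Longrightarrow> a \<in> L \<Longrightarrow> a \<otimes>\<^bsub>J\<^esub> r \<in> L"
  shows "right_ideal ((\<lambda>a. I +>\<^bsub>J\<^esub> a) ` L) Q"
  unfolding right_ideal_def
proof (intro conjI Q_addsub[OF L(1-4)] ballI)
  fix r x assume r: "r \<in> carrier Q" and x: "x \<in> (\<lambda>a. I +>\<^bsub>J\<^esub> a) ` L"
  obtain r' where r': "r' \<in> carrier J" "r = I +>\<^bsub>J\<^esub> r'" using r Q_carrier by blast
  obtain a where a: "a \<in> L" "x = I +>\<^bsub>J\<^esub> a" using x by blast
  have "x \<otimes>\<^bsub>Q\<^esub> r = I +>\<^bsub>J\<^esub> (a \<otimes>\<^bsub>J\<^esub> r')" using r' a L(1) Q_mult by blast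
  then show "x \<otimes>\<^bsub>Q\<^esub> r \<in> (\<lambda>a. I +>\<^bsub>J\<^esub> a) ` L" using L(5) r' a by blast
qed (auto intro: L)

end


definition Pe :: "nat \<Rightarrow> nat \<Rightarrow> word \<Rightarrow> 'a::field" where "Pe i k = basis_elt (dl i (k,k))"

lemma dl_mul: "wmul (dl i (k,k)) (dl i (l,l)) = dl i (max k l, max k l)"
  by (rule ext) (auto simp: wmul_def dl_def w0_def bmul_def max_def min_def)

context jac begin

lemma Pe_carr: "i < n \<Longrightarrow> (Pe i k :: word \<Rightarrow> 'a) \<in> carrier J"
  unfolding Pe_def by (rule e_carr[OF dl_words])

lemma Pe_mul: "(Pe i k :: word \<Rightarrow> 'a) \<otimes>\<^bsub>J\<^esub> Pe i l = Pe i (max k l)"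
  unfolding Pe_def by (simp add: basis_mult dl_mul)

lemma E_notin:
  assumes i: "i < n" and m: "m \<in> words n" and nI: "p_gen i m \<notin> I"
  shows "(Pe i k :: word \<Rightarrow> 'a) \<ominus>\<^bsub>J\<^esub> Pe i (Suc k) \<notin> I"
proof
  assume EI: "(Pe i k :: word \<Rightarrow> 'a) \<ominus>\<^bsub>J\<^esub> Pe i (Suc k) \<in> I"
  obtain s t where st: "m i = (s, t)" by force
  define u where "u = m(i := (s, k))"
  define v where "v = dl i (k, t)"
  have uw: "u \<in> words n" using m i by (auto simp: u_def words_def)
  have vw: "v \<in> words n" using i by (simp add: v_def dl_words)
  have e1: "wmul (wmul u (dl i (k,k))) v = m"
    by (rule ext) (simp add: wmul_def dl_def w0_def bmul_def u_def v_def st)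
  have e2: "wmul (wmul u (dl i (Suc k, Suc k))) v = m(i := (fst (m i) + 1, snd (m i) + 1))"
    by (rule ext) (simp add: wmul_def dl_def w0_def bmul_def u_def v_def st)
  have "basis_elt u \<otimes>\<^bsub>J\<^esub> ((Pe i k :: word \<Rightarrow> 'a) \<ominus>\<^bsub>J\<^esub> Pe i (Suc k)) \<otimes>\<^bsub>J\<^esub> basis_elt v \<in> I"
    using I_rmul[OF I_lmul[OF EI e_carr[OF uw]] e_carr[OF vw]] .
  also have "basis_elt u \<otimes>\<^bsub>J\<^esub> ((Pe i k :: word \<Rightarrow> 'a) \<ominus>\<^bsub>J\<^esub> Pe i (Suc k)) \<otimes>\<^bsub>J\<^esub> basis_elt v
      = basis_elt m \<ominus>\<^bsub>J\<^esub> basis_elt (m(i := (fst (m i) + 1, snd (m i) + 1)))"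
    by (simp only: ring_id1[OF e_carr[OF uw] Pe_carr[OF i] Pe_carr[OF i] e_carr[OF vw]])
      (simp add: basis_mult Pe_def e1 e2[simplified])
  also have "\<dots> = p_gen i m"
    by (simp add: minus_J e_carr m words_fun_upd i p_gen_def)
  finally show False using nI by simp
qed

lemma exists_bad_gen:
  assumes "\<not> frak_a n \<subseteq> I"
  obtains i m where "i < n" "m \<in> words n" "p_gen i m \<notin> I"
proof -
  have "\<not> (\<forall>i<n. \<forall>m\<in>words n. (p_gen i m :: word \<Rightarrow> 'a) \<in> I)"
  proof
    assume "\<forall>i<n. \<forall>m\<in>words n. (p_gen i m :: word \<Rightarrow> 'a) \<in> I"
    then have "(\<Union>i<n. {p_gen i m | m. m \<in> words n}) \<subseteq> I" by auto
    then show False using assms K_span_in_I unfolding frak_a_def by auto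
  qed
  then show ?thesis using that by auto
qed

lemma ring_id4:
  assumes c: "a \<in> carrier J" "p \<in> carrier J" "q \<in> carrier J"
    and h: "p \<otimes>\<^bsub>J\<^esub> q = q" "q \<otimes>\<^bsub>J\<^esub> p = q" "p \<otimes>\<^bsub>J\<^esub> p = p" "q \<otimes>\<^bsub>J\<^esub> q = q"
  shows "((\<one>\<^bsub>J\<^esub> \<ominus>\<^bsub>J\<^esub> q) \<ominus>\<^bsub>J\<^esub> a \<otimes>\<^bsub>J\<^esub> (\<one>\<^bsub>J\<^esub> \<ominus>\<^bsub>J\<^esub> p)) \<otimes>\<^bsub>J\<^esub> (p \<ominus>\<^bsub>J\<^esub> q) = p \<ominus>\<^bsub>J\<^esub> q"
    and "(p \<ominus>\<^bsub>J\<^esub> q) \<otimes>\<^bsub>J\<^esub> ((\<one>\<^bsub>J\<^esub> \<ominus>\<^bsub>J\<^esub> q) \<ominus>\<^bsub>J\<^esub> (\<one>\<^bsub>J\<^esub> \<ominus>\<^bsub>J\<^esub> p) \<otimes>\<^bsub>J\<^esub> a) = p \<ominus>\<^bsub>J\<^esub> q"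
    and "(\<one>\<^bsub>J\<^esub> \<ominus>\<^bsub>J\<^esub> p) \<otimes>\<^bsub>J\<^esub> (\<one>\<^bsub>J\<^esub> \<ominus>\<^bsub>J\<^esub> q) = \<one>\<^bsub>J\<^esub> \<ominus>\<^bsub>J\<^esub> p"
    and "(\<one>\<^bsub>J\<^esub> \<ominus>\<^bsub>J\<^esub> q) \<otimes>\<^bsub>J\<^esub> (\<one>\<^bsub>J\<^esub> \<ominus>\<^bsub>J\<^esub> p) = \<one>\<^bsub>J\<^esub> \<ominus>\<^bsub>J\<^esub> p"
proof -
  interpret ring J by (rule Jring)
  have h2: "a \<otimes>\<^bsub>J\<^esub> (p \<otimes>\<^bsub>J\<^esub> q) = a \<otimes>\<^bsub>J\<^esub> q" "a \<otimes>\<^bsub>J\<^esub> (q \<otimes>\<^bsub>J\<^esub> p) = a \<otimes>\<^bsub>J\<^esub> q"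
    "a \<otimes>\<^bsub>J\<^esub> (p \<otimes>\<^bsub>J\<^esub> p) = a \<otimes>\<^bsub>J\<^esub> p" "a \<otimes>\<^bsub>J\<^esub> (q \<otimes>\<^bsub>J\<^esub> q) = a \<otimes>\<^bsub>J\<^esub> q"
    "p \<otimes>\<^bsub>J\<^esub> (q \<otimes>\<^bsub>J\<^esub> a) = q \<otimes>\<^bsub>J\<^esub> a" "q \<otimes>\<^bsub>J\<^esub> (p \<otimes>\<^bsub>J\<^esub> a) = q \<otimes>\<^bsub>J\<^esub> a"
    "p \<otimes>\<^bsub>J\<^esub> (p \<otimes>\<^bsub>J\<^esub> a) = p \<otimes>\<^bsub>J\<^esub> a" "q \<otimes>\<^bsub>J\<^esub> (q \<otimes>\<^bsub>J\<^esub> a) = q \<otimes>\<^bsub>J\<^esub> a"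
    using c h by (simp_all flip: m_assoc)
  show "((\<one>\<^bsub>J\<^esub> \<ominus>\<^bsub>J\<^esub> q) \<ominus>\<^bsub>J\<^esub> a \<otimes>\<^bsub>J\<^esub> (\<one>\<^bsub>J\<^esub> \<ominus>\<^bsub>J\<^esub> p)) \<otimes>\<^bsub>J\<^esub> (p \<ominus>\<^bsub>J\<^esub> q) = p \<ominus>\<^bsub>J\<^esub> q"
    using c by (simp add: ring_simprules h h2; algebra)
  show "(p \<ominus>\<^bsub>J\<^esub> q) \<otimes>\<^bsub>J\<^esub> ((\<one>\<^bsub>J\<^esub> \<ominus>\<^bsub>J\<^esub> q) \<ominus>\<^bsub>J\<^esub> (\<one>\<^bsub>J\<^esub> \<ominus>\<^bsub>J\<^esub> p) \<otimes>\<^bsub>J\<^esub> a) = p \<ominus>\<^bsub>J\<^esub> q"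
    using c by (simp add: ring_simprules h h2; algebra)
  show "(\<one>\<^bsub>J\<^esub> \<ominus>\<^bsub>J\<^esub> p) \<otimes>\<^bsub>J\<^esub> (\<one>\<^bsub>J\<^esub> \<ominus>\<^bsub>J\<^esub> q) = \<one>\<^bsub>J\<^esub> \<ominus>\<^bsub>J\<^esub> p"
    using c by (simp add: ring_simprules h h2; algebra)
  show "(\<one>\<^bsub>J\<^esub> \<ominus>\<^bsub>J\<^esub> q) \<otimes>\<^bsub>J\<^esub> (\<one>\<^bsub>J\<^esub> \<ominus>\<^bsub>J\<^esub> p) = \<one>\<^bsub>J\<^esub> \<ominus>\<^bsub>J\<^esub> p"
    using c by (simp add: ring_simprules h h2; algebra)
qed

end


context jac begin

lemma Pe_hyps:
  "(Pe i k :: word \<Rightarrow> 'a) \<otimes>\<^bsub>J\<^esub> Pe i (Suc k) = Pe i (Suc k)"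
  "(Pe i (Suc k) :: word \<Rightarrow> 'a) \<otimes>\<^bsub>J\<^esub> Pe i k = Pe i (Suc k)"
  "(Pe i k :: word \<Rightarrow> 'a) \<otimes>\<^bsub>J\<^esub> Pe i k = Pe i k"
  "(Pe i (Suc k) :: word \<Rightarrow> 'a) \<otimes>\<^bsub>J\<^esub> Pe i (Suc k) = Pe i (Suc k)"
  by (simp_all add: Pe_mul)

lemma left_noeth_frak:
  assumes LN: "left_noetherian Q" shows "frak_a n \<subseteq> I"
proof (rule ccontr)
  interpret ring J by (rule Jring)
  assume "\<not> frak_a n \<subseteq> I"
  then obtain i m where i: "i < n" and m: "m \<in> words n" and nI: "p_gen i m \<notin> I"
    by (rule exists_bad_gen)
  define F where "F k = \<one>\<^bsub>J\<^esub> \<ominus>\<^bsub>J\<^esub> (Pe i k :: word \<Rightarrow> 'a)" for k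
  have Fc: "F k \<in> carrier J" for k using Pe_carr[OF i] by (simp add: F_def)
  define L where "L k = (\<lambda>a. a \<otimes>\<^bsub>J\<^esub> F k) ` carrier J" for k
  define C where "C k = (\<lambda>a. I +>\<^bsub>J\<^esub> a) ` L k" for k
  have LI: "left_ideal (C k) Q" for k
    unfolding C_def
  proof (rule Q_left_ideal)
    show "L k \<subseteq> carrier J" using Fc by (auto simp: L_def)
    show "\<zero>\<^bsub>J\<^esub> \<in> L k" unfolding L_def
      by (rule image_eqI[of _ _ "\<zero>\<^bsub>J\<^esub>"]) (use Fc in auto)
    show "a \<oplus>\<^bsub>J\<^esub> b \<in> L k" if "a \<in> L k" "b \<in> L k" for a b
      using that Fc unfolding L_def by (auto simp: l_distr[symmetric])
    show "\<ominus>\<^bsub>J\<^esub> a \<in> L k" if "a \<in> L k" for a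
      using that Fc unfolding L_def by (auto simp: l_minus[symmetric])
    show "r \<otimes>\<^bsub>J\<^esub> a \<in> L k" if "r \<in> carrier J" "a \<in> L k" for r a
      using that Fc unfolding L_def by (auto simp: m_assoc[symmetric])
  qed
  have mono: "C k \<subseteq> C (Suc k)" for k
  proof -
    have "L k \<subseteq> L (Suc k)"
    proof
      fix x assume "x \<in> L k"
      then obtain a where a: "a \<in> carrier J" "x = a \<otimes>\<^bsub>J\<^esub> F k" by (auto simp: L_def)
      have "x = (a \<otimes>\<^bsub>J\<^esub> F k) \<otimes>\<^bsub>J\<^esub> F (Suc k)"
        using a Fc ring_id4(3)[OF a(1) Pe_carr[OF i] Pe_carr[OF i] Pe_hyps]
        by (simp add: m_assoc F_def)
      then show "x \<in> L (Suc k)" using a Fc unfolding L_def by blast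
    qed
    then show ?thesis by (auto simp: C_def)
  qed
  obtain N where N: "\<And>k. k \<ge> N \<Longrightarrow> C k = C N"
    using LN LI mono unfolding left_noetherian_def by blast
  have "F (Suc N) \<in> L (Suc N)"
    unfolding L_def using Fc by (intro image_eqI[of _ _ "\<one>\<^bsub>J\<^esub>"]) auto
  then have "I +>\<^bsub>J\<^esub> F (Suc N) \<in> C (Suc N)"
    unfolding C_def by (rule imageI)
  then have "I +>\<^bsub>J\<^esub> F (Suc N) \<in> C N" using N[of "Suc N"] by simp
  then obtain a where a: "a \<in> carrier J" "I +>\<^bsub>J\<^esub> F (Suc N) = I +>\<^bsub>J\<^esub> (a \<otimes>\<^bsub>J\<^esub> F N)"
    unfolding C_def L_def by auto
  then have "F (Suc N) \<ominus>\<^bsub>J\<^esub> (a \<otimes>\<^bsub>J\<^esub> F N) \<in> I"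
    using Q_eq Fc by auto
  then have "(F (Suc N) \<ominus>\<^bsub>J\<^esub> (a \<otimes>\<^bsub>J\<^esub> F N)) \<otimes>\<^bsub>J\<^esub> (Pe i N \<ominus>\<^bsub>J\<^esub> Pe i (Suc N)) \<in> I"
    using Pe_carr[OF i] by (intro I_rmul) auto
  then have "(Pe i N :: word \<Rightarrow> 'a) \<ominus>\<^bsub>J\<^esub> Pe i (Suc N) \<in> I"
    using ring_id4(1)[OF a(1) Pe_carr[OF i] Pe_carr[OF i] Pe_hyps] by (simp add: F_def)
  then show False using E_notin[OF i m nI] by blast
qed

lemma right_noeth_frak:
  assumes RN: "right_noetherian Q" shows "frak_a n \<subseteq> I"
proof (rule ccontr)
  interpret ring J by (rule Jring)
  assume "\<not> frak_a n \<subseteq> I"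
  then obtain i m where i: "i < n" and m: "m \<in> words n" and nI: "p_gen i m \<notin> I"
    by (rule exists_bad_gen)
  define F where "F k = \<one>\<^bsub>J\<^esub> \<ominus>\<^bsub>J\<^esub> (Pe i k :: word \<Rightarrow> 'a)" for k
  have Fc: "F k \<in> carrier J" for k using Pe_carr[OF i] by (simp add: F_def)
  define L where "L k = (\<lambda>a. F k \<otimes>\<^bsub>J\<^esub> a) ` carrier J" for k
  define C where "C k = (\<lambda>a. I +>\<^bsub>J\<^esub> a) ` L k" for k
  have RI: "right_ideal (C k) Q" for k
    unfolding C_def
  proof (rule Q_right_ideal)
    show "L k \<subseteq> carrier J" using Fc by (auto simp: L_def)
    show "\<zero>\<^bsub>J\<^esub> \<in> L k" unfolding L_def
      by (rule image_eqI[of _ _ "\<zero>\<^bsub>J\<^esub>"]) (use Fc in auto)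
    show "a \<oplus>\<^bsub>J\<^esub> b \<in> L k" if "a \<in> L k" "b \<in> L k" for a b
      using that Fc unfolding L_def by (auto simp: r_distr[symmetric])
    show "\<ominus>\<^bsub>J\<^esub> a \<in> L k" if "a \<in> L k" for a
      using that Fc unfolding L_def by (auto simp: r_minus[symmetric])
    show "a \<otimes>\<^bsub>J\<^esub> r \<in> L k" if "r \<in> carrier J" "a \<in> L k" for r a
      using that Fc unfolding L_def by (auto simp: m_assoc)
  qed
  have mono: "C k \<subseteq> C (Suc k)" for k
  proof -
    have "L k \<subseteq> L (Suc k)"
    proof
      fix x assume "x \<in> L k"
      then obtain a where a: "a \<in> carrier J" "x = F k \<otimes>\<^bsub>J\<^esub> a" by (auto simp: L_def)
      have "x = F (Suc k) \<otimes>\<^bsub>J\<^esub> (F k \<otimes>\<^bsub>J\<^esub> a)"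
        using a Fc ring_id4(4)[OF a(1) Pe_carr[OF i] Pe_carr[OF i] Pe_hyps]
        by (simp add: m_assoc[symmetric] F_def)
      then show "x \<in> L (Suc k)" using a Fc unfolding L_def by blast
    qed
    then show ?thesis by (auto simp: C_def)
  qed
  obtain N where N: "\<And>k. k \<ge> N \<Longrightarrow> C k = C N"
    using RN RI mono unfolding right_noetherian_def by blast
  have "F (Suc N) \<in> L (Suc N)"
    unfolding L_def using Fc by (intro image_eqI[of _ _ "\<one>\<^bsub>J\<^esub>"]) auto
  then have "I +>\<^bsub>J\<^esub> F (Suc N) \<in> C (Suc N)"
    unfolding C_def by (rule imageI)
  then have "I +>\<^bsub>J\<^esub> F (Suc N) \<in> C N" using N[of "Suc N"] by simp
  then obtain a where a: "a \<in> carrier J" "I +>\<^bsub>J\<^esub> F (Suc N) = I +>\<^bsub>J\<^esub> (F N \<otimes>\<^bsub>J\<^esub> a)"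
    unfolding C_def L_def by auto
  then have "F (Suc N) \<ominus>\<^bsub>J\<^esub> (F N \<otimes>\<^bsub>J\<^esub> a) \<in> I"
    using Q_eq Fc by auto
  then have "(Pe i N \<ominus>\<^bsub>J\<^esub> Pe i (Suc N)) \<otimes>\<^bsub>J\<^esub> (F (Suc N) \<ominus>\<^bsub>J\<^esub> (F N \<otimes>\<^bsub>J\<^esub> a)) \<in> I"
    using Pe_carr[OF i] by (intro I_lmul) auto
  then have "(Pe i N :: word \<Rightarrow> 'a) \<ominus>\<^bsub>J\<^esub> Pe i (Suc N) \<in> I"
    using ring_id4(2)[OF a(1) Pe_carr[OF i] Pe_carr[OF i] Pe_hyps] by (simp add: F_def)
  then show False using E_notin[OF i m nI] by blast
qed

end


lemma nat_subseq_mono: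
  fixes t :: "nat \<Rightarrow> nat"
  shows "\<exists>f :: nat \<Rightarrow> nat. strict_mono f \<and> (\<forall>i j. i \<le> j \<longrightarrow> t (f i) \<le> t (f j))"
proof -
  define mv where "mv p = (LEAST v. \<exists>q>p. t q = v)" for p
  have mv: "\<exists>q>p. t q = mv p" for p unfolding mv_def by (rule LeastI_ex) (intro exI[of _ "t (Suc p)"] exI[of _ "Suc p"], simp)
  have mvle: "q > p \<Longrightarrow> mv p \<le> t q" for p q unfolding mv_def by (rule Least_le) blast
  define pick where "pick p = (SOME q. q > p \<and> t q = mv p)" for p
  have pick: "pick p > p \<and> t (pick p) = mv p" for p unfolding pick_def by (rule someI_ex) (use mv in blast)
  define f where "f k = (pick ^^ Suc k) 0" for k
  have fS: "f (Suc k) = pick (f k)" for k by (simp add: f_def)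
  have sm: "strict_mono f" unfolding strict_mono_Suc_iff using pick fS by simp
  have mono1: "t (f k) \<le> t (f (Suc k))" for k
  proof (cases k)
    case 0
    have "f 0 = pick 0" by (simp add: f_def)
    have e1: "f (Suc 0) = pick (f 0)" by (rule fS)
    have "t (f 0) = mv 0" using pick[of 0] \<open>f 0 = pick 0\<close> by simp
    also have "mv 0 \<le> t (f (Suc 0))" by (rule mvle) (use pick[of 0] pick[of "f 0"] e1 \<open>f 0 = pick 0\<close> in simp)
    finally show ?thesis using 0 by simp
  next
    case (Suc k')
    have e1: "f k = pick (f k')" using fS[of k'] Suc by simp
    have e2: "t (f k) = mv (f k')" unfolding e1 using pick[of "f k'"] by simp
    have "f k' < f (Suc k)" using sm Suc unfolding strict_mono_def by simp
    then have "mv (f k') \<le> t (f (Suc k))" by (rule mvle)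
    then show ?thesis using e2 by simp
  qed
  have X: "\<forall>i j. i \<le> j \<longrightarrow> t (f i) \<le> t (f j)"
  proof (intro allI impI)
    fix i j :: nat assume "i \<le> j"
    then show "t (f i) \<le> t (f j)" by (rule lift_Suc_mono_le[of "\<lambda>k. t (f k)", OF mono1])
  qed
  show ?thesis by (rule exI[of _ f], rule conjI, rule sm, rule X)
qed

lemma dickson_subseq:
  fixes s :: "nat \<Rightarrow> nat list"
  assumes "\<And>k. length (s k) = n"
  shows "\<exists>f :: nat \<Rightarrow> nat. strict_mono f \<and> (\<forall>i j. i \<le> j \<longrightarrow> list_all2 (\<le>) (s (f i)) (s (f j)))"
  using assms
proof (induction n arbitrary: s)
  case 0
  then have "s k = []" for k by auto
  then show ?case by (intro exI[of _ id]) (auto simp: strict_mono_def)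
next
  case (Suc n s)
  have sk: "s k = hd (s k) # tl (s k)" for k using Suc.prems[of k] by (cases "s k") auto
  obtain f1 :: "nat \<Rightarrow> nat" where f1: "strict_mono f1" "\<forall>i j. i \<le> j \<longrightarrow> list_all2 (\<le>) (tl (s (f1 i))) (tl (s (f1 j)))"
  proof -
    have "length (tl (s k)) = n" for k using Suc.prems[of k] by simp
    then have "\<exists>f :: nat \<Rightarrow> nat. strict_mono f \<and> (\<forall>i j. i \<le> j \<longrightarrow> list_all2 (\<le>) (tl (s (f i))) (tl (s (f j))))"
      by (rule Suc.IH)
    then show ?thesis by (elim exE conjE) (erule that, assumption)
  qed
  obtain f2 :: "nat \<Rightarrow> nat" where f2: "strict_mono f2" "\<forall>i j. i \<le> j \<longrightarrow> hd (s (f1 (f2 i))) \<le> hd (s (f1 (f2 j)))"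
    using nat_subseq_mono[of "\<lambda>k. hd (s (f1 k))"] by auto
  have sm: "strict_mono (f1 \<circ> f2)" using f1(1) f2(1) by (simp add: strict_mono_def)
  have X: "\<forall>i j. i \<le> j \<longrightarrow> list_all2 (\<le>) (s ((f1 \<circ> f2) i)) (s ((f1 \<circ> f2) j))"
  proof (intro allI impI)
    fix i j :: nat assume ij: "i \<le> j"
    have "f2 i \<le> f2 j" using f2(1) ij by (simp add: strict_mono_less_eq)
    then have "list_all2 (\<le>) (tl (s (f1 (f2 i)))) (tl (s (f1 (f2 j))))" using f1(2) by blast
    moreover have "hd (s (f1 (f2 i))) \<le> hd (s (f1 (f2 j)))" using f2(2) ij by blast
    ultimately show "list_all2 (\<le>) (s ((f1 \<circ> f2) i)) (s ((f1 \<circ> f2) j))"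
      by (subst sk, subst (2) sk) simp
  qed
  show ?case by (rule exI[of _ "f1 \<circ> f2"], rule conjI, rule sm, rule X)
qed

lemma dickson:
  fixes s :: "nat \<Rightarrow> nat list"
  assumes "\<And>k. length (s k) = n"
  shows "\<exists>i j. i < j \<and> list_all2 (\<le>) (s i) (s j)"
proof -
  obtain f :: "nat \<Rightarrow> nat" where f: "strict_mono f" "\<forall>i j. i \<le> j \<longrightarrow> list_all2 (\<le>) (s (f i)) (s (f j))"
  proof -
    have "\<exists>f :: nat \<Rightarrow> nat. strict_mono f \<and> (\<forall>i j. i \<le> j \<longrightarrow> list_all2 (\<le>) (s (f i)) (s (f j)))"
      by (rule dickson_subseq) (rule assms)
    then show ?thesis by (elim exE conjE) (erule that, assumption)
  qed
  have "f 0 < f 1" using f(1) by (simp add: strict_mono_def)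
  moreover have "list_all2 (\<le>) (s (f 0)) (s (f 1))" using f(2) by simp
  ultimately show ?thesis by blast
qed

lemma upclosed_chain_stable:
  fixes U :: "nat \<Rightarrow> nat list set"
  assumes len: "\<And>k u. u \<in> U k \<Longrightarrow> length u = n"
    and up: "\<And>k u w. u \<in> U k \<Longrightarrow> list_all2 (\<le>) u w \<Longrightarrow> w \<in> U k"
    and mono: "\<And>k. U k \<subseteq> U (Suc k)"
  shows "\<exists>N. \<forall>k\<ge>N. U k = U N"
proof (rule ccontr)
  assume H: "\<not> (\<exists>N. \<forall>k\<ge>N. U k = U N)"
  have monoU: "U a \<subseteq> U b" if "a \<le> b" for a b using that
  proof (induction b)
    case 0 then show ?case by simp
  next
    case (Suc b) then show ?case using mono[of b] by (auto simp: le_Suc_eq)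
  qed
  have ex: "\<exists>k' > k. \<exists>u. u \<in> U k' \<and> u \<notin> U k" for k
  proof -
    have "\<exists>k'. k' \<ge> k \<and> U k' \<noteq> U k" using H by auto
    then obtain k' where "k' \<ge> k" "U k' \<noteq> U k" by blast
    then have "k' > k" "\<not> U k' \<subseteq> U k" using monoU[of k k'] by (auto simp: le_less)
    then show ?thesis by blast
  qed
  define nxt where "nxt k = (SOME k'. k' > k \<and> (\<exists>u. u \<in> U k' \<and> u \<notin> U k))" for k
  have nxt: "nxt k > k \<and> (\<exists>u. u \<in> U (nxt k) \<and> u \<notin> U k)" for k
    unfolding nxt_def using someI_ex[OF ex[of k]] by blast
  define ks where "ks j = (nxt ^^ j) 0" for j
  define s where "s j = (SOME u. u \<in> U (ks (Suc j)) \<and> u \<notin> U (ks j))" for j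
  have s: "s j \<in> U (ks (Suc j)) \<and> s j \<notin> U (ks j)" for j
    unfolding s_def ks_def using someI_ex[OF conjunct2[OF nxt]] by simp
  have ksm: "ks j < ks (Suc j)" for j unfolding ks_def using nxt by simp
  then have ksmono: "strict_mono ks" by (simp add: strict_mono_Suc_iff)
  have "length (s k) = n" for k using len s[of k] by blast
  then obtain i j where ij: "i < j" "list_all2 (\<le>) (s i) (s j)"
    using dickson[of s n] by blast
  have "Suc i \<le> j" using ij by simp
  then have "ks (Suc i) \<le> ks j" using ksmono by (simp add: strict_mono_less_eq)
  then have "s i \<in> U (ks j)" using s[of i] monoU by blast
  then have "s j \<in> U (ks j)" using up ij(2) by blast
  then show False using s[of j] by blast
qed


definition XW :: "nat \<Rightarrow> word set" where "XW n = {m \<in> words n. \<forall>i. snd (m i) = 0}"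

definition ev :: "nat \<Rightarrow> word \<Rightarrow> nat list" where "ev n m = map (\<lambda>i. fst (m i)) [0..<n]"

definition addl :: "nat list \<Rightarrow> nat list \<Rightarrow> nat list" where "addl xs ys = map2 (+) xs ys"

lemma length_ev[simp]: "length (ev n m) = n" by (simp add: ev_def)

lemma ev_inj: "a \<in> XW n \<Longrightarrow> b \<in> XW n \<Longrightarrow> ev n a = ev n b \<Longrightarrow> a = b"
proof (rule ext)
  fix i assume a: "a \<in> XW n" and b: "b \<in> XW n" and e: "ev n a = ev n b"
  show "a i = b i"
  proof (cases "i < n")
    case True
    then have "ev n a ! i = ev n b ! i" using e by simp
    then have "fst (a i) = fst (b i)" using True by (simp add: ev_def)
    moreover have "snd (a i) = snd (b i)" using a b by (simp add: XW_def)
    ultimately show ?thesis by (simp add: prod_eq_iff)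
  next
    case False then show ?thesis using a b by (simp add: XW_def words_def)
  qed
qed

lemma wmul_XW: "a \<in> XW n \<Longrightarrow> v \<in> XW n \<Longrightarrow> wmul a v = (\<lambda>i. (fst (a i) + fst (v i), 0))"
  by (rule ext) (simp add: XW_def wmul_def bmul_def prod_eq_iff)

lemma wmul_XW_mem: "a \<in> XW n \<Longrightarrow> v \<in> XW n \<Longrightarrow> wmul a v \<in> XW n"
  by (simp add: wmul_XW) (simp add: XW_def words_def)

lemma ev_wmul: "a \<in> XW n \<Longrightarrow> v \<in> XW n \<Longrightarrow> ev n (wmul a v) = addl (ev n a) (ev n v)"
  by (rule nth_equalityI) (simp_all add: wmul_XW ev_def addl_def)

lemma wmul_XW_inj: "a \<in> XW n \<Longrightarrow> b \<in> XW n \<Longrightarrow> v \<in> XW n \<Longrightarrow> wmul a v = wmul b v \<Longrightarrow> a = b"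
  by (rule ev_inj) (auto simp: ev_def wmul_XW fun_eq_iff)

lemma length_addl[simp]: "length (addl xs ys) = min (length xs) (length ys)"
  by (simp add: addl_def)

lemma addl_less:
  "length xs = length ys \<Longrightarrow> length ys = length zs \<Longrightarrow> xs < ys \<Longrightarrow> addl xs zs < addl ys zs"
proof (induction xs ys zs rule: list_induct3)
  case Nil then show ?case by simp
next
  case (Cons x xs y ys z zs)
  then show ?case by (auto simp: addl_def Cons_less_Cons)
qed

lemma addl_le:
  "length xs = length ys \<Longrightarrow> length ys = length zs \<Longrightarrow> xs \<le> ys \<Longrightarrow> addl xs zs \<le> addl ys zs"
  using addl_less[of xs ys zs] by (auto simp: order.order_iff_strict)


definition LE :: "nat \<Rightarrow> (word \<Rightarrow> 'a::zero) \<Rightarrow> nat list" where "LE n f = Max (ev n ` supp f)"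

lemma LE_in: "finite (supp f) \<Longrightarrow> supp f \<noteq> {} \<Longrightarrow> \<exists>a\<in>supp f. ev n a = LE n f"
proof -
  assume "finite (supp f)" "supp f \<noteq> {}"
  then have "Max (ev n ` supp f) \<in> ev n ` supp f" by (intro Max_in) auto
  then show ?thesis unfolding LE_def by auto
qed

lemma LE_ge: "finite (supp f) \<Longrightarrow> a \<in> supp f \<Longrightarrow> ev n a \<le> LE n f"
  unfolding LE_def by (rule Max_ge) auto

lemma LE_length: "finite (supp f) \<Longrightarrow> supp f \<noteq> {} \<Longrightarrow> length (LE n f) = n"
  using LE_in[of f n] by (metis length_ev)

context jac begin

definition Xs where "Xs = {f \<in> carrier J. supp f \<subseteq> XW n}"

lemma mult_e_val:
  assumes f: "supp f \<subseteq> XW n" and v: "v \<in> XW n" and a: "a \<in> XW n"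
  shows "(f \<otimes>\<^bsub>J\<^esub> basis_elt v) (wmul a v) = f a"
proof -
  have "{p \<in> supp f \<times> {v}. wmul (fst p) (snd p) = wmul a v} = (if a \<in> supp f then {(a, v)} else {})"
    using wmul_XW_inj[OF _ a v] f by auto
  note eqS = this
  show ?thesis
    unfolding J_mult supp_basis
    by (simp only: eqS) (cases "a \<in> supp f", simp_all add: basis_elt_def supp_def)
qed

lemma mult_e_supp:
  assumes f: "supp f \<subseteq> XW n" and v: "v \<in> XW n"
  shows "supp (f \<otimes>\<^bsub>J\<^esub> basis_elt v) = (\<lambda>a. wmul a v) ` supp f"
proof
  show "supp (f \<otimes>\<^bsub>J\<^esub> basis_elt v) \<subseteq> (\<lambda>a. wmul a v) ` supp f"
    using mult_supp[of n f "basis_elt v"] by auto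
  show "(\<lambda>a. wmul a v) ` supp f \<subseteq> supp (f \<otimes>\<^bsub>J\<^esub> basis_elt v)"
  proof
    fix x assume "x \<in> (\<lambda>a. wmul a v) ` supp f"
    then obtain a where a: "a \<in> supp f" "x = wmul a v" by blast
    then have "(f \<otimes>\<^bsub>J\<^esub> basis_elt v) x = f a" using mult_e_val[OF f v] f by auto
    then show "x \<in> supp (f \<otimes>\<^bsub>J\<^esub> basis_elt v)" using a by (simp add: supp_def)
  qed
qed

lemma mult_e_Xs: "f \<in> Xs \<Longrightarrow> v \<in> XW n \<Longrightarrow> f \<otimes>\<^bsub>J\<^esub> basis_elt v \<in> Xs"
proof -
  assume f: "f \<in> Xs" and v: "v \<in> XW n"
  have "basis_elt v \<in> carrier J" using v by (intro e_carr) (simp add: XW_def)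
  then have "f \<otimes>\<^bsub>J\<^esub> basis_elt v \<in> carrier J" using f ring.ring_simprules(5)[OF Jring] by (auto simp: Xs_def)
  moreover have "supp (f \<otimes>\<^bsub>J\<^esub> basis_elt v) \<subseteq> XW n"
    using f v by (auto simp: Xs_def mult_e_supp wmul_XW_mem)
  ultimately show ?thesis by (simp add: Xs_def)
qed

lemma LE_shift:
  assumes f: "f \<in> Xs" "supp f \<noteq> {}" and v: "v \<in> XW n"
  shows "LE n (f \<otimes>\<^bsub>J\<^esub> basis_elt v) = addl (LE n f) (ev n v)"
proof -
  have fin: "finite (supp f)" using f by (simp add: Xs_def J_carrier)
  have sf: "supp f \<subseteq> XW n" using f by (simp add: Xs_def)
  have S: "ev n ` supp (f \<otimes>\<^bsub>J\<^esub> basis_elt v) = (\<lambda>a. addl (ev n a) (ev n v)) ` supp f"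
    unfolding mult_e_supp[OF sf v] image_image
    by (rule image_cong[OF refl]) (use sf v ev_wmul in blast)
  obtain a0 where a0: "a0 \<in> supp f" "ev n a0 = LE n f" using LE_in[OF fin f(2)] by blast
  show ?thesis unfolding LE_def S
  proof (rule Max_eqI)
    show "finite ((\<lambda>a. addl (ev n a) (ev n v)) ` supp f)" using fin by simp
    show "addl (Max (ev n ` supp f)) (ev n v) \<in> (\<lambda>a. addl (ev n a) (ev n v)) ` supp f"
      using a0 unfolding LE_def by force
    fix y assume "y \<in> (\<lambda>a. addl (ev n a) (ev n v)) ` supp f"
    then obtain a where a: "a \<in> supp f" "y = addl (ev n a) (ev n v)" by blast
    have le: "ev n a \<le> Max (ev n ` supp f)" using LE_ge[OF fin a(1)] by (simp add: LE_def)
    have len: "length (Max (ev n ` supp f)) = n" using LE_length[OF fin f(2)] by (simp add: LE_def)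
    show "y \<le> addl (Max (ev n ` supp f)) (ev n v)"
      unfolding a(2) using addl_le[of "ev n a" "Max (ev n ` supp f)" "ev n v"] le len by simp
  qed
qed

end


lemma chain_mono_le: "(\<And>k. P k \<subseteq> P (Suc k)) \<Longrightarrow> a \<le> b \<Longrightarrow> P a \<subseteq> P b"
proof (induction b)
  case 0 then show ?case by simp
next
  case (Suc b)
  show ?case
  proof (cases "a = Suc b")
    case True then show ?thesis by simp
  next
    case False
    then have "a \<le> b" using Suc.prems(2) by simp
    then have "P a \<subseteq> P b" using Suc.IH Suc.prems(1) by blast
    then show ?thesis using Suc.prems(1)[of b] by blast
  qed
qed
context jac begin

lemma Xs_fin: "f \<in> Xs \<Longrightarrow> finite (supp f)" by (simp add: Xs_def J_carrier)
lemma Xs_XW: "f \<in> Xs \<Longrightarrow> supp f \<subseteq> XW n" by (simp add: Xs_def)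

lemma P_acc:
  fixes P :: "nat \<Rightarrow> (word \<Rightarrow> 'a) set"
  assumes PX: "\<And>k. P k \<subseteq> Xs"
    and P0: "\<And>k. (\<lambda>_. 0) \<in> P k"
    and Padd: "\<And>k f g. f \<in> P k \<Longrightarrow> g \<in> P k \<Longrightarrow> (\<lambda>m. f m + g m) \<in> P k"
    and Psc: "\<And>k f c. f \<in> P k \<Longrightarrow> (\<lambda>m. c * f m) \<in> P k"
    and Pe: "\<And>k f v. f \<in> P k \<Longrightarrow> v \<in> XW n \<Longrightarrow> f \<otimes>\<^bsub>J\<^esub> basis_elt v \<in> P k"
    and Pmono: "\<And>k. P k \<subseteq> P (Suc k)"
  shows "\<exists>N. \<forall>k\<ge>N. P k = P N"
proof -
  define U where "U k = {LE n f | f. f \<in> P k \<and> supp f \<noteq> {}}" for k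
  have UI: "LE n f \<in> U k" if "f \<in> P k" "supp f \<noteq> {}" for f k
    unfolding U_def by (rule CollectI, rule exI[of _ f]) (simp add: that)
  have UE: "\<exists>f. f \<in> P k \<and> supp f \<noteq> {} \<and> LE n f = u" if "u \<in> U k" for u k
    using that unfolding U_def by auto
  have len: "length u = n" if uU: "u \<in> U k" for k u
  proof -
    obtain f where f: "f \<in> P k" "supp f \<noteq> {}" "LE n f = u" using UE[OF uU] by blast
    have "f \<in> Xs" using PX f(1) by blast
    then show ?thesis using LE_length[OF Xs_fin f(2)] unfolding f(3)[symmetric] by blast
  qed
  have up: "w \<in> U k" if u: "u \<in> U k" and uw: "list_all2 (\<le>) u w" for k u w
  proof -
    obtain f where f: "f \<in> P k" "supp f \<noteq> {}" "LE n f = u" using UE[OF u] by auto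
    have lu: "length u = n" using len u by blast
    have lw: "length w = n" using lu uw by (simp add: list_all2_lengthD[symmetric])
    define v where "v = (\<lambda>i. if i < n then (w ! i - u ! i, 0::nat) else (0, 0))"
    have v: "v \<in> XW n" by (auto simp: XW_def words_def v_def)
    have fX: "f \<in> Xs" using f PX by blast
    have "addl u (ev n v) = w"
    proof (rule nth_equalityI)
      show "length (addl u (ev n v)) = length w" using lu lw by simp
      fix i assume "i < length (addl u (ev n v))"
      then have i: "i < n" using lu by simp
      have "u ! i \<le> w ! i" using uw i lu by (simp add: list_all2_nthD)
      then show "addl u (ev n v) ! i = w ! i" using i lu by (simp add: addl_def ev_def v_def)
    qed
    then have "LE n (f \<otimes>\<^bsub>J\<^esub> basis_elt v) = w" using LE_shift[OF fX f(2) v] f(3) by simp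
    moreover have "supp (f \<otimes>\<^bsub>J\<^esub> basis_elt v) \<noteq> {}" using mult_e_supp[OF Xs_XW[OF fX] v] f(2) by simp
    moreover have "f \<otimes>\<^bsub>J\<^esub> basis_elt v \<in> P k" using Pe[OF f(1) v] .
    ultimately show ?thesis using UI by metis
  qed
  have Umono: "U k \<subseteq> U (Suc k)" for k
  proof
    fix u assume "u \<in> U k"
    then obtain f where f: "f \<in> P k" "supp f \<noteq> {}" "LE n f = u" using UE by blast
    then have "f \<in> P (Suc k)" using Pmono by blast
    then show "u \<in> U (Suc k)" using UI[of f "Suc k"] f by simp
  qed
  have "\<exists>N. \<forall>k\<ge>N. U k = U N"
    apply (rule upclosed_chain_stable[of U n])
      apply (erule len)
     apply (erule up, assumption)
    apply (rule Umono)
    done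
  then obtain N where N: "\<And>k. k \<ge> N \<Longrightarrow> U k = U N" by blast
  have main: "P k \<subseteq> P N" if kN: "k \<ge> N" for k
  proof -
    have PNk: "P N \<subseteq> P k" using chain_mono_le[of P, OF Pmono kN] .
    have "\<And>f. f \<in> P k \<Longrightarrow> supp f \<noteq> {} \<Longrightarrow> LE n f = L \<Longrightarrow> f \<in> P N" for L
    proof (induction L rule: less_induct)
      case (less L f)
      have fX: "f \<in> Xs" using less.prems PX by blast
      have "L \<in> U k" using UI[OF less.prems(1,2)] less.prems(3) by simp
      then have "L \<in> U N" using N[OF kN] by simp
      then obtain g where g: "g \<in> P N" "supp g \<noteq> {}" "LE n g = L" using UE by blast
      have gX: "g \<in> Xs" using g PX by blast
      obtain a where a: "a \<in> supp f" "ev n a = L" using LE_in[OF Xs_fin[OF fX] less.prems(2)] less.prems(3) by blast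
      obtain b where b: "b \<in> supp g" "ev n b = L" using LE_in[OF Xs_fin[OF gX] g(2)] g(3) by blast
      have ab: "a = b" using ev_inj a b Xs_XW[OF fX] Xs_XW[OF gX] by blast
      have ga: "g a \<noteq> 0" using b ab by (simp add: supp_def)
      define c where "c = f a / g a"
      define h where "h = (\<lambda>m. f m + (- c) * g m)"
      have "g \<in> P k" using g(1) PNk by blast
      then have hP: "h \<in> P k" unfolding h_def by (intro Padd[OF less.prems(1)] Psc)
      have fh: "f = (\<lambda>m. h m + c * g m)" by (simp add: h_def)
      show ?case
      proof (cases "supp h = {}")
        case True
        then have "f = (\<lambda>m. c * g m)" unfolding fh by (auto simp: supp_def)
        then show ?thesis using Psc[OF g(1)] by simp
      next
        case False
        have hX: "h \<in> Xs" using hP PX by blast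
        obtain a' where a': "a' \<in> supp h" "ev n a' = LE n h" using LE_in[OF Xs_fin[OF hX] False] by blast
        have sh: "supp h \<subseteq> supp f \<union> supp g" by (auto simp: supp_def h_def)
        have "ev n a' \<le> L"
        proof (cases "a' \<in> supp f")
          case True then show ?thesis using LE_ge[OF Xs_fin[OF fX]] less.prems(3) by blast
        next
          case False then have "a' \<in> supp g" using sh a' by blast
          then show ?thesis using LE_ge[OF Xs_fin[OF gX]] g(3) by blast
        qed
        moreover have "a' \<noteq> a"
        proof
          assume "a' = a"
          then have "h a = 0 \<Longrightarrow> False" using a' by (simp add: supp_def)
          moreover have "h a = 0" using ga by (simp add: h_def c_def)
          ultimately show False by blast
        qed
        then have "ev n a' \<noteq> L" using ev_inj[of a' n a] a a' Xs_XW[OF fX] Xs_XW[OF hX] by auto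
        ultimately have "LE n h < L" using a' by simp
        then have "h \<in> P N" using less.IH hP False by blast
        then show ?thesis unfolding fh by (intro Padd Psc g(1))
      qed
    qed
    note claim = this
    show ?thesis
    proof
      fix f assume f: "f \<in> P k"
      show "f \<in> P N"
      proof (cases "supp f = {}")
        case True
        then have "f = (\<lambda>_. 0)" by (auto simp: supp_def)
        then show ?thesis using P0 by simp
      next
        case False show ?thesis by (rule claim[OF f False refl])
      qed
    qed
  qed
  show ?thesis
  proof (intro exI allI impI)
    fix k assume "k \<ge> N"
    then show "P k = P N" using main chain_mono_le[of P, OF Pmono] by blast
  qed
qed

end


context jac begin

lemma LI_props:
  assumes "additive_subgroup L Q"
  shows "L \<subseteq> carrier Q" "\<zero>\<^bsub>Q\<^esub> \<in> L" "\<And>x y. x \<in> L \<Longrightarrow> y \<in> L \<Longrightarrow> x \<oplus>\<^bsub>Q\<^esub> y \<in> L"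
proof -
  have sg: "subgroup L (add_monoid Q)" using assms by (rule additive_subgroup.a_subgroup)
  show "L \<subseteq> carrier Q" using subgroup.subset[OF sg] by simp
  show "\<zero>\<^bsub>Q\<^esub> \<in> L" using subgroup.one_closed[OF sg] by simp
  show "\<And>x y. x \<in> L \<Longrightarrow> y \<in> L \<Longrightarrow> x \<oplus>\<^bsub>Q\<^esub> y \<in> L" using subgroup.m_closed[OF sg] by simp
qed

lemma rcos_in_Q: "a \<in> carrier J \<Longrightarrow> I +>\<^bsub>J\<^esub> a \<in> carrier Q"
  using Q_carrier by blast

lemma I_rcos_I: "a \<in> I \<Longrightarrow> I +>\<^bsub>J\<^esub> a = I"
proof -
  interpret ideal I J by (rule I_ideal)
  assume "a \<in> I" then show ?thesis by (rule a_rcos_const)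
qed

lemma frak_left_noeth:
  assumes FA: "frak_a n \<subseteq> I" shows "left_noetherian Q"
  unfolding left_noetherian_def
proof (intro allI impI)
  interpret ring J by (rule Jring)
  fix C :: "nat \<Rightarrow> (word \<Rightarrow> 'a) set set"
  assume "(\<forall>k. left_ideal (C k) Q) \<and> (\<forall>k. C k \<subseteq> C (Suc k))"
  then have LI: "\<And>k. left_ideal (C k) Q" and Cmono: "\<And>k. C k \<subseteq> C (Suc k)" by auto
  have comm: "ring_commutative Q" by (rule frak_imp_comm[OF FA])
  have Csub: "C k \<subseteq> carrier Q" for k using LI_props(1) LI[of k] unfolding left_ideal_def by blast
  have Czero: "\<zero>\<^bsub>Q\<^esub> \<in> C k" for k using LI_props(2) LI[of k] unfolding left_ideal_def by blast
  have Cadd: "x \<oplus>\<^bsub>Q\<^esub> y \<in> C k" if "x \<in> C k" "y \<in> C k" for x y k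
    using LI_props(3) LI[of k] that unfolding left_ideal_def by blast
  have Cmul: "r \<otimes>\<^bsub>Q\<^esub> x \<in> C k" if "r \<in> carrier Q" "x \<in> C k" for r x k
    using LI[of k] that unfolding left_ideal_def by blast
  define D where "D k = {a \<in> carrier J. I +>\<^bsub>J\<^esub> a \<in> C k}" for k
  have D_add: "a \<oplus>\<^bsub>J\<^esub> b \<in> D k" if "a \<in> D k" "b \<in> D k" for a b k
    using that Cadd[of "I +>\<^bsub>J\<^esub> a" k "I +>\<^bsub>J\<^esub> b"] by (auto simp: D_def Q_add)
  have D_lmul: "r \<otimes>\<^bsub>J\<^esub> a \<in> D k" if "r \<in> carrier J" "a \<in> D k" for r a k
    using that Cmul[of "I +>\<^bsub>J\<^esub> r" "I +>\<^bsub>J\<^esub> a" k] rcos_in_Q by (auto simp: D_def Q_mult)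
  have D_rmul: "a \<otimes>\<^bsub>J\<^esub> r \<in> D k" if r: "r \<in> carrier J" and a: "a \<in> D k" for r a k
  proof -
    have ac: "a \<in> carrier J" using a by (simp add: D_def)
    have "I +>\<^bsub>J\<^esub> (a \<otimes>\<^bsub>J\<^esub> r) = (I +>\<^bsub>J\<^esub> a) \<otimes>\<^bsub>Q\<^esub> (I +>\<^bsub>J\<^esub> r)" using Q_mult ac r by simp
    also have "\<dots> = (I +>\<^bsub>J\<^esub> r) \<otimes>\<^bsub>Q\<^esub> (I +>\<^bsub>J\<^esub> a)"
      using comm rcos_in_Q[OF ac] rcos_in_Q[OF r] unfolding ring_commutative_def by blast
    finally show ?thesis using Cmul[of "I +>\<^bsub>J\<^esub> r" "I +>\<^bsub>J\<^esub> a" k] rcos_in_Q[OF r] a ac r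
      by (simp add: D_def)
  qed
  have D_I: "a \<in> D k" if "a \<in> I" for a k
    using that I_sub I_rcos_I Czero by (auto simp: D_def Q_zero)
  have D_carr: "D k \<subseteq> carrier J" for k by (auto simp: D_def)
  have Dmono: "D k \<subseteq> D (Suc k)" for k using Cmono by (auto simp: D_def)
  define P where "P k = D k \<inter> Xs" for k
  have PX: "P k \<subseteq> Xs" for k by (auto simp: P_def)
  have P0: "(\<lambda>_. 0) \<in> P k" for k
  proof -
    have "(\<lambda>_. 0) \<in> I" by (rule I_zero)
    then have "(\<lambda>_. 0) \<in> D k" by (rule D_I)
    moreover have "(\<lambda>_. 0::'a) \<in> Xs" by (simp add: Xs_def J_carrier supp_def)
    ultimately show ?thesis by (simp add: P_def)
  qed
  have Padd: "(\<lambda>m. f m + g m) \<in> P k" if "f \<in> P k" "g \<in> P k" for f g k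
  proof -
    have "f \<oplus>\<^bsub>J\<^esub> g \<in> D k" using that D_add by (simp add: P_def)
    moreover have "f \<oplus>\<^bsub>J\<^esub> g \<in> carrier J" using that by (simp add: P_def Xs_def)
    moreover have "supp (\<lambda>m. f m + g m) \<subseteq> XW n"
    proof -
      have "supp (\<lambda>m. f m + g m) \<subseteq> supp f \<union> supp g" by (auto simp: supp_def)
      then show ?thesis using that by (auto simp: P_def Xs_def)
    qed
    ultimately show ?thesis by (simp add: P_def Xs_def J_add)
  qed
  have Psc: "(\<lambda>m. c * f m) \<in> P k" if "f \<in> P k" for f c k
  proof -
    have "scal c \<otimes>\<^bsub>J\<^esub> f \<in> D k" using that D_lmul[OF scal_carrier] by (simp add: P_def)
    moreover have "(\<lambda>m. c * f m) \<in> carrier J" using that by (intro scal_fun_carrier) (simp add: P_def Xs_def)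
    moreover have "supp (\<lambda>m. c * f m) \<subseteq> XW n"
      using that by (auto simp: P_def Xs_def supp_def)
    ultimately show ?thesis by (simp add: P_def Xs_def scal_mult_left)
  qed
  have XWw: "v \<in> XW n \<Longrightarrow> v \<in> words n" for v by (simp add: XW_def)
  have Pe: "f \<otimes>\<^bsub>J\<^esub> basis_elt v \<in> P k" if "f \<in> P k" "v \<in> XW n" for f v k
    using that D_rmul[OF e_carr[OF XWw]] mult_e_Xs by (simp add: P_def)
  have Pmono: "P k \<subseteq> P (Suc k)" for k using Dmono by (auto simp: P_def)
  obtain N where N: "\<And>k. k \<ge> N \<Longrightarrow> P k = P N"
  proof -
    have "\<exists>N. \<forall>k\<ge>N. P k = P N"
      apply (rule P_acc)
           apply (rule PX)
          apply (rule P0)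
         apply (erule (1) Padd)
        apply (erule Psc)
       apply (erule (1) Pe)
      apply (rule Pmono)
      done
    then show ?thesis using that by blast
  qed
  have DkN: "D k \<subseteq> D N" if kN: "k \<ge> N" for k
  proof
    fix a assume aD: "a \<in> D k"
    have ac: "a \<in> carrier J" using aD D_carr by blast
    have fin: "finite (supp a)" and sw: "supp a \<subseteq> words n" using ac by (auto simp: J_carrier)
    define B where "B = (\<Sum>m\<in>supp a. \<Sum>i<n. snd (m i))"
    define xB :: word where "xB = (\<lambda>i. if i < n then (B, 0) else (0, 0))"
    define yB :: word where "yB = (\<lambda>i. if i < n then (0, B) else (0, 0))"
    have xBX: "xB \<in> XW n" by (simp add: XW_def words_def xB_def)
    have yBw: "yB \<in> words n" by (simp add: words_def yB_def)
    have Bge: "snd (m i) \<le> B" if "m \<in> supp a" "i < n" for m i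
    proof -
      have "snd (m i) \<le> (\<Sum>i<n. snd (m i))" using that(2) by (intro member_le_sum) auto
      also have "\<dots> \<le> B" unfolding B_def using that(1) fin by (intro member_le_sum) auto
      finally show ?thesis .
    qed
    define g where "g = a \<otimes>\<^bsub>J\<^esub> basis_elt xB"
    have gD: "g \<in> D k" unfolding g_def by (rule D_rmul[OF e_carr[OF XWw[OF xBX]] aD])
    have gc: "g \<in> carrier J" unfolding g_def using ac e_carr[OF XWw[OF xBX]] by simp
    have "supp g \<subseteq> XW n"
    proof
      fix w assume "w \<in> supp g"
      then obtain m where m: "m \<in> supp a" "w = wmul m xB"
        using mult_supp[of n a "basis_elt xB"] unfolding g_def by auto
      have mw: "m \<in> words n" using m(1) sw by blast
      have "snd (w i) = 0" for i
      proof (cases "i < n")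
        case True
        then show ?thesis using Bge[OF m(1) True] by (simp add: m(2) wmul_def bmul_def xB_def)
      next
        case False
        then show ?thesis using mw by (simp add: m(2) wmul_def bmul_def xB_def words_def)
      qed
      moreover have "w \<in> words n" using m(2) wmul_words[OF mw XWw[OF xBX]] by simp
      ultimately show "w \<in> XW n" by (simp add: XW_def)
    qed
    then have "g \<in> P k" using gD gc by (simp add: P_def Xs_def)
    then have "g \<in> P N" using N[OF kN] by simp
    then have "g \<in> D N" by (simp add: P_def)
    then have hD: "g \<otimes>\<^bsub>J\<^esub> basis_elt yB \<in> D N" by (rule D_rmul[OF e_carr[OF yBw]])
    have nfeq: "nf w0 = nf (wmul xB yB)"
      by (rule ext) (simp add: nf_def nfp_def w0_def wmul_def bmul_def xB_def yB_def)
    have "(\<lambda>x. basis_elt w0 x - basis_elt (wmul xB yB) x) \<in> (frak_a n :: (word \<Rightarrow> 'a) set)"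
      by (rule same_nf[OF w0_words wmul_words[OF XWw[OF xBX] yBw] nfeq])
    then have "\<one>\<^bsub>J\<^esub> \<ominus>\<^bsub>J\<^esub> basis_elt xB \<otimes>\<^bsub>J\<^esub> basis_elt yB \<in> I"
      using FA by (simp add: J_one basis_mult minus_J e_carr wmul_words XWw[OF xBX] yBw subsetD)
    then have "a \<otimes>\<^bsub>J\<^esub> (\<one>\<^bsub>J\<^esub> \<ominus>\<^bsub>J\<^esub> basis_elt xB \<otimes>\<^bsub>J\<^esub> basis_elt yB) \<in> I"
      by (rule I_lmul[OF _ ac])
    also have "a \<otimes>\<^bsub>J\<^esub> (\<one>\<^bsub>J\<^esub> \<ominus>\<^bsub>J\<^esub> basis_elt xB \<otimes>\<^bsub>J\<^esub> basis_elt yB) = a \<ominus>\<^bsub>J\<^esub> g \<otimes>\<^bsub>J\<^esub> basis_elt yB"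
      unfolding g_def using ac e_carr[OF XWw[OF xBX]] e_carr[OF yBw]
      by (simp add: a_minus_def r_distr r_minus m_assoc)
    finally have "a \<ominus>\<^bsub>J\<^esub> g \<otimes>\<^bsub>J\<^esub> basis_elt yB \<in> D N" by (rule D_I)
    then have "(a \<ominus>\<^bsub>J\<^esub> g \<otimes>\<^bsub>J\<^esub> basis_elt yB) \<oplus>\<^bsub>J\<^esub> (g \<otimes>\<^bsub>J\<^esub> basis_elt yB) \<in> D N"
      using hD by (rule D_add)
    moreover have "(a \<ominus>\<^bsub>J\<^esub> g \<otimes>\<^bsub>J\<^esub> basis_elt yB) \<oplus>\<^bsub>J\<^esub> (g \<otimes>\<^bsub>J\<^esub> basis_elt yB) = a"
      using ac gc e_carr[OF yBw] by algebra
    ultimately show "a \<in> D N" by simp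
  qed
  show "\<exists>N. \<forall>k\<ge>N. C k = C N"
  proof (intro exI allI impI)
    fix k assume kN: "k \<ge> N"
    show "C k = C N"
    proof
      show "C N \<subseteq> C k" using chain_mono_le[of C, OF Cmono kN] .
      show "C k \<subseteq> C N"
      proof
        fix x assume x: "x \<in> C k"
        then have "x \<in> carrier Q" using Csub by blast
        then obtain a where a: "a \<in> carrier J" "x = I +>\<^bsub>J\<^esub> a" using Q_carrier by blast
        then have "a \<in> D k" using x by (simp add: D_def)
        then have "a \<in> D N" using DkN[OF kN] by blast
        then show "x \<in> C N" using a by (simp add: D_def)
      qed
    qed
  qed
qed

end


context jac begin

lemma frak_right_noeth:
  assumes FA: "frak_a n \<subseteq> I" shows "right_noetherian Q"
proof -
  have comm: "ring_commutative Q" by (rule frak_imp_comm[OF FA])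
  have LN: "left_noetherian Q" by (rule frak_left_noeth[OF FA])
  have "left_ideal L Q" if "right_ideal L Q" for L
  proof -
    have as: "additive_subgroup L Q" using that by (simp add: right_ideal_def)
    have sub: "L \<subseteq> carrier Q" using LI_props(1)[OF as] .
    show ?thesis unfolding left_ideal_def
    proof (intro conjI as ballI)
      fix r a assume r: "r \<in> carrier Q" and a: "a \<in> L"
      have "r \<otimes>\<^bsub>Q\<^esub> a = a \<otimes>\<^bsub>Q\<^esub> r" using comm r a sub unfolding ring_commutative_def by blast
      then show "r \<otimes>\<^bsub>Q\<^esub> a \<in> L" using that r a unfolding right_ideal_def by simp
    qed
  qed
  then show ?thesis using LN unfolding left_noetherian_def right_noetherian_def by blast
qed

lemma main_equiv:
  "(left_noetherian Q \<longleftrightarrow> frak_a n \<subseteq> I) \<and> (right_noetherian Q \<longleftrightarrow> frak_a n \<subseteq> I)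
   \<and> (ring_commutative Q \<longleftrightarrow> frak_a n \<subseteq> I)"
  using left_noeth_frak frak_left_noeth right_noeth_frak frak_right_noeth comm_imp_frak frak_imp_comm
  by blast

end

theorem theorem5p1:
  fixes n :: nat and I :: "(word \<Rightarrow> 'a::field) set"
  assumes "n \<ge> 1"
    and "ideal I (Jacobson_alg n :: (word \<Rightarrow> 'a) ring)"
  shows "(left_noetherian (Jacobson_alg n Quot I) \<longleftrightarrow> right_noetherian (Jacobson_alg n Quot I))
       \<and> (right_noetherian (Jacobson_alg n Quot I) \<longleftrightarrow> ring_commutative (Jacobson_alg n Quot I))
       \<and> (ring_commutative (Jacobson_alg n Quot I) \<longleftrightarrow> frak_a n \<subseteq> I)"
proof -
  interpret jac n I by (rule jac.intro) (rule assms(2))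
  show ?thesis using main_equiv by blast
qed


end
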